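(* Let $T\in\mathcal{T}_h^\Gamma$ and $r_T=|L_T|$. For every polynomial $v\in\mathbb{P}^k(T)$ (extended polynomially to $\mathbb{R}^2$) and $j=0,1$, $$h_T^j\|D^jv\|_{L^\infty(T)}\le C\,h_T^k\sum_{\ell=0}^k\frac{1}{r_T^{\ell}}\max_{0\le i\le\ell}\big|D_{\eta}^{k-\ell}v(x_i^{\ell,T})\big|,$$ where $C$ depends only on the shape regularity of $T$, on $k$, and on the regularity of $\Gamma$.
   Context: $\Omega\subset\mathbb{R}^2$ is a polygonal domain containing a smooth closed curve $\Gamma$ enclosing the open set $\Omega^-$; $\Omega^+=\Omega\setminus\overline{\Omega^-}$. $\mathcal{T}_h$ is a shape-regular, quasi-uniform triangulation of $\Omega$, $h_T=\operatorname{diam}T$, and $k\ge1$ is an integer. Standing assumption: $\Gamma$ meets the boundary of each triangle in at most two points, and if in exactly two points they lie on different edges. $\mathcal{T}_h^\Gamma$ is the set of $T\in\mathcal{T}_h$ with $T\cap\Gamma\ne\emptyset$. For $T\in\mathcal{T}_h^\Gamma$: $y_T,z_T$ are the two endpoints of $T\cap\Gamma$, $L_T$ is the segment joining them, $T^\pm=T\cap\Omega^\pm$, $\eta$ is the unit vector perpendicular to $L_T$ pointing out of $T^-$, and $\tau$ is $\eta$ rotated by $90^\circ$ counterclockwise; $D_\eta$ denotes the directional derivative in direction $\eta$. For $\ell=0,\dots,k$, $\{\bar x_i^{\ell,T}\}_{i=0}^{\ell}$ are the $\ell+1$ Gauss–Legendre points of the segment $L_T$, and $x_i^{\ell,T}$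 is the intersection of $\Gamma$ with the line through $\bar x_i^{\ell,T}$ perpendicular to $L_T$. *)

theory Defs
  imports "HOL-Analysis.Analysis"
begin

definition poly2 :: "nat \<Rightarrow> (real^2 \<Rightarrow> real) \<Rightarrow> bool" where
  "poly2 k v \<longleftrightarrow> (\<exists>c :: nat \<Rightarrow> nat \<Rightarrow> real.
      \<forall>x. v x = (\<Sum>a\<le>k. \<Sum>b\<le>k - a. c a b * (x$1) ^ a * (x$2) ^ b))"

definition grad :: "(real^2 \<Rightarrow> real) \<Rightarrow> real^2 \<Rightarrow> real^2" where
  "grad f x = (\<chi> i. frechet_derivative f (at x) (axis i 1))"

definition dirderiv :: "real^2 \<Rightarrow> (real^2 \<Rightarrow> real) \<Rightarrow> real^2 \<Rightarrow> real" where
  "dirderiv e f x = frechet_derivative f (at x) e"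

definition dirderiv_pow :: "nat \<Rightarrow> real^2 \<Rightarrow> (real^2 \<Rightarrow> real) \<Rightarrow> real^2 \<Rightarrow> real" where
  "dirderiv_pow m e f = (dirderiv e ^^ m) f"

text \<open>Legendre polynomials via Bonnet's recursion, and Gauss--Legendre nodes on [-1,1].\<close>
fun legendre :: "nat \<Rightarrow> real \<Rightarrow> real" where
  "legendre 0 t = 1"
| "legendre (Suc 0) t = t"
| "legendre (Suc (Suc n)) t =
     ((2 * real n + 3) * t * legendre (Suc n) t - (real n + 1) * legendre n t) / (real n + 2)"

definition gl_nodes :: "nat \<Rightarrow> real set" where
  "gl_nodes l = {t. -1 \<le> t \<and> t \<le> 1 \<and> legendre (Suc l) t = 0}"

definition gl_point :: "real^2 \<Rightarrow> real^2 \<Rightarrow> real \<Rightarrow> real^2" where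
  "gl_point y z t = y + ((1 + t) / 2) *\<^sub>R (z - y)"

definition vderiv :: "(real \<Rightarrow> real^2) \<Rightarrow> real \<Rightarrow> real^2" where
  "vderiv f t = vector_derivative f (at t)"

definition smooth_closed_curve :: "(real \<Rightarrow> real^2) \<Rightarrow> bool" where
  "smooth_closed_curve \<gamma> \<longleftrightarrow>
     (\<forall>n t. ((vderiv ^^ n) \<gamma>) differentiable (at t))
   \<and> (\<forall>t. \<gamma> (t + 1) = \<gamma> t)
   \<and> inj_on \<gamma> {0..<1}
   \<and> (\<forall>t. vderiv \<gamma> t \<noteq> 0)"

definition nondeg_triangle :: "real^2 \<Rightarrow> real^2 \<Rightarrow> real^2 \<Rightarrow> bool" where
  "nondeg_triangle a b c \<longleftrightarrow> \<not> collinear {a, b, c}"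

definition inradius :: "(real^2) set \<Rightarrow> real" where
  "inradius T = Sup {r. 0 \<le> r \<and> (\<exists>p. ball p r \<subseteq> T)}"

definition shape_param :: "(real^2) set \<Rightarrow> real" where
  "shape_param T = diameter T / inradius T"

end

theory Submission
  imports Defs "HOL-Computational_Algebra.Polynomial"
begin

fun LP :: "nat \<Rightarrow> real poly" where
  "LP 0 = 1"
| "LP (Suc 0) = [:0,1:]"
| "LP (Suc (Suc n)) = smult (1/(real n+2)) (smult (2*real n+3) ([:0,1:] * LP (Suc n)) - smult (real n+1) (LP n))"

lemma legendre_LP: "legendre n t = poly (LP n) t"
  by (induction n rule: LP.induct) (simp_all add: field_simps)

lemma legendre_one: "legendre n 1 = 1"
  by (induction n rule: LP.induct) (simp_all add: field_simps)

lemma legendre_m1: "legendre n (-1) = (-1)^n"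
  by (induction n rule: LP.induct) (simp_all add: field_simps)

lemma LP_nz: "LP n \<noteq> 0"
  using legendre_one[of n] by (auto simp: legendre_LP)

lemma LP_deg: "degree (LP n) \<le> n"
proof (induction n rule: LP.induct)
  case (3 n)
  have a: "degree ([:0,1:] * LP (Suc n)) \<le> Suc (Suc n)"
    using degree_mult_le[of "[:0,1::real:]" "LP (Suc n)"] 3 by auto
  have "degree (smult (2*real n+3) ([:0,1:] * LP (Suc n)) - smult (real n+1) (LP n)) \<le> Suc (Suc n)"
    using degree_diff_le[of "smult (2*real n+3) ([:0,1:] * LP (Suc n))" "Suc (Suc n)" "smult (real n+1) (LP n)"] a 3
    by (meson degree_smult_le le_Suc_eq order_trans)
  then show ?case by (simp add: order_trans[OF degree_smult_le])
qed auto

lemma legendre_cont: "continuous_on A (legendre n)"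
proof -
  have "legendre n = poly (LP n)" by (auto simp: legendre_LP)
  then show ?thesis by (simp add: continuous_on_poly)
qed

lemma legendre_rec: "1 \<le> n \<Longrightarrow> legendre (Suc n) t = ((2*real n+1) * t * legendre n t - real n * legendre (n-1) t) / (real n+1)"
  by (cases n) (simp_all add: field_simps)

lemma ivt_sign:
  fixes f :: "real \<Rightarrow> real"
  assumes "a < b" "continuous_on {a..b} f" "f a * f b < 0"
  shows "\<exists>y. a < y \<and> y < b \<and> f y = 0"
proof -
  have "f a \<noteq> 0" "f b \<noteq> 0" using assms(3) by auto
  have "\<exists>y. a \<le> y \<and> y \<le> b \<and> f y = 0"
  proof (cases "f a < 0")
    case True
    then have "f b > 0" using assms(3) by (simp add: mult_less_0_iff)
    then show ?thesis using IVT'[of f a 0 b] True assms by auto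
  next
    case False
    then have "f b < 0" using assms(3) by (simp add: mult_less_0_iff)
    then show ?thesis using IVT2'[of f b 0 a] False assms by auto
  qed
  then show ?thesis using \<open>f a \<noteq> 0\<close> \<open>f b \<noteq> 0\<close> by (metis order_le_less)
qed

lemma sign_const:
  fixes f :: "real \<Rightarrow> real"
  assumes "continuous_on UNIV f" "\<And>x. min a b \<le> x \<Longrightarrow> x \<le> max a b \<Longrightarrow> f x \<noteq> 0"
  shows "f a * f b > 0"
proof (rule ccontr)
  assume "\<not> f a * f b > 0"
  moreover have "f a \<noteq> 0" "f b \<noteq> 0" using assms(2)[of a] assms(2)[of b] by auto
  ultimately have neg: "f a * f b < 0" by (simp add: not_less order_le_less)
  show False
  proof (cases "a < b")
    case True
    then obtain y where "a < y" "y < b" "f y = 0"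
      using ivt_sign[of a b f] neg continuous_on_subset[OF assms(1)] by auto
    then show False using assms(2)[of y] by auto
  next
    case False
    then have "b < a" using neg by (cases "a = b") auto
    then obtain y where "b < y" "y < a" "f y = 0"
      using ivt_sign[of b a f] neg continuous_on_subset[OF assms(1)] by (auto simp: mult.commute)
    then show False using assms(2)[of y] by auto
  qed
qed

lemma inj_strict:
  fixes X :: "nat \<Rightarrow> real"
  assumes "\<And>i j. i < j \<Longrightarrow> j \<le> N \<Longrightarrow> X i < X j"
  shows "inj_on X {a..N}"
proof (rule inj_onI)
  fix x y assume xy: "x \<in> {a..N}" "y \<in> {a..N}" "X x = X y"
  show "x = y"
  proof (rule ccontr)
    assume "x \<noteq> y"
    then consider "x < y" | "y < x" by (meson linorder_neqE_nat)
    then show False using assms[of x y] assms[of y x] xy by cases auto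
  qed
qed

definition interl :: "nat \<Rightarrow> (nat \<Rightarrow> real) \<Rightarrow> bool" where
  "interl n X \<longleftrightarrow> X 0 = -1 \<and> X (Suc n) = 1 \<and> (\<forall>i j. i < j \<longrightarrow> j \<le> Suc n \<longrightarrow> X i < X j)
    \<and> (\<forall>i\<in>{1..n}. legendre n (X i) = 0 \<and> (-1)^(n-i) * legendre (n-1) (X i) > 0)
    \<and> (\<forall>i\<le>n. \<forall>t. X i < t \<longrightarrow> t < X (Suc i) \<longrightarrow> (-1)^(n-i) * legendre n t > 0)"

lemma interl_base: "\<exists>X. interl 1 X"
proof -
  define X where "X = (\<lambda>i::nat. if i = 0 then -1 else if i = 1 then 0 else (1::real))"
  have "interl 1 X"
    unfolding interl_def X_def
  proof (intro conjI allI impI ballI)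
    fix i j :: nat assume "i < j" "j \<le> Suc 1" then show "(if i = 0 then -1 else if i = 1 then 0 else (1::real)) < (if j = 0 then -1 else if j = 1 then 0 else 1)"
      by auto
  next
    fix i t assume "i \<le> (1::nat)" "(if i = 0 then -1 else if i = 1 then 0 else (1::real)) < t" "t < (if Suc i = 0 then -1 else if Suc i = 1 then 0 else 1)"
    then show "0 < (-1) ^ (1 - i) * legendre 1 t" by (cases i) auto
  qed auto
  then show ?thesis by blast
qed

lemma roots_all:
  assumes "p \<noteq> (0::real poly)" "degree p \<le> card A" "finite A" "\<forall>a\<in>A. poly p a = 0" "poly p r = 0"
  shows "r \<in> A"
proof (rule ccontr)
  assume "r \<notin> A"
  then have "card (insert r A) = Suc (card A)" using assms by simp
  moreover have "card (insert r A) \<le> card {x. poly p x = 0}"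
    using assms by (intro card_mono poly_roots_finite) auto
  moreover have "card {x. poly p x = 0} \<le> degree p" using card_poly_roots_bound assms by blast
  ultimately show False using assms by linarith
qed

lemma interl_step:
  assumes "1 \<le> n" "interl n X"
  shows "\<exists>Y. interl (Suc n) Y"
proof -
  note I = assms(2)[unfolded interl_def]
  have X0: "X 0 = -1" and Xn: "X (Suc n) = 1" and Xm: "\<And>i j. i < j \<Longrightarrow> j \<le> Suc n \<Longrightarrow> X i < X j"
    using I by auto
  have Xle: "X i \<le> X j" if "i \<le> j" "j \<le> Suc n" for i j
    using Xm[of i j] that by (cases "i = j") auto
  let ?P = "legendre (Suc n)"
  have sgn: "(-1)^(Suc n - i) * ?P (X i) > 0" if "i \<le> Suc n" for i
  proof -
    have "i = 0 \<or> i = Suc n \<or> i \<in> {1..n}" using that by auto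
    then consider "i = 0" | "i = Suc n" | "i \<in> {1..n}" by blast
    then show ?thesis
    proof cases
      case 1 then show ?thesis using X0 by (simp add: legendre_m1 flip: power_add)
    next
      case 2 then show ?thesis using Xn by (simp add: legendre_one)
    next
      case 3
      then have z: "legendre n (X i) = 0" and s: "(-1)^(n-i) * legendre (n-1) (X i) > 0" using I by auto
      have "?P (X i) = - (real n / (real n+1)) * legendre (n-1) (X i)"
        using legendre_rec[OF assms(1), of "X i"] z by simp
      moreover have "(-1::real)^(Suc n - i) = - ((-1)^(n-i))" using 3 by (simp add: Suc_diff_le)
      ultimately have "(-1)^(Suc n - i) * ?P (X i) = (real n / (real n+1)) * ((-1)^(n-i) * legendre (n-1) (X i))"
        by simp
      also have "\<dots> > 0" using s assms(1) by simp
      finally show ?thesis .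
    qed
  qed
  have "\<exists>y. X (j-1) < y \<and> y < X j \<and> ?P y = 0" if "j \<in> {1..Suc n}" for j
  proof (rule ivt_sign)
    show "X (j-1) < X j" using Xm[of "j-1" j] that by auto
    show "continuous_on {X (j - 1)..X j} ?P" by (rule legendre_cont)
    have a: "(-1)^(Suc n - (j-1)) * ?P (X (j-1)) > 0" using sgn[of "j-1"] that by auto
    have b: "(-1)^(Suc n - j) * ?P (X j) > 0" using sgn[of j] that by auto
    have "Suc n - (j-1) = Suc (Suc n - j)" using that by auto
    then have a': "- ((-1)^(Suc n - j)) * ?P (X (j-1)) > 0" using a by simp
    have "(-1::real)^(Suc n - j) = 1 \<or> (-1::real)^(Suc n - j) = -1" by (cases "even (Suc n - j)") auto
    then show "?P (X (j-1)) * ?P (X j) < 0" using a' b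
      by (auto simp: zero_less_mult_iff mult_less_0_iff)
  qed
  then have "\<forall>j\<in>{1..Suc n}. \<exists>y. X (j-1) < y \<and> y < X j \<and> ?P y = 0" by blast
  from bchoice[OF this] obtain y where y0: "\<forall>j\<in>{1..Suc n}. X (j-1) < y j \<and> y j < X j \<and> ?P (y j) = 0"
    by blast
  have y: "X (j-1) < y j \<and> y j < X j \<and> ?P (y j) = 0" if "j \<in> {1..Suc n}" for j using y0 that by blast
  define Y where "Y = (\<lambda>i. if i = 0 then -1 else if i = Suc (Suc n) then 1 else y i)"
  have Ymono: "Y i < Y j" if "i < j" "j \<le> Suc (Suc n)" for i j
  proof -
    have "(i = 0 \<and> j = Suc (Suc n)) \<or> (i = 0 \<and> j \<in> {1..Suc n}) \<or> (i \<in> {1..Suc n} \<and> j = Suc (Suc n))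
      \<or> (i \<in> {1..Suc n} \<and> j \<in> {1..Suc n})" using that by auto
    then consider "i = 0" "j = Suc (Suc n)" | "i = 0" "j \<in> {1..Suc n}" | "i \<in> {1..Suc n}" "j = Suc (Suc n)"
      | "i \<in> {1..Suc n}" "j \<in> {1..Suc n}" by blast
    then show ?thesis
    proof cases
      case 1 then show ?thesis by (simp add: Y_def)
    next
      case 2
      have "X 0 \<le> X (j-1)" using Xle[of 0 "j-1"] 2 by auto
      then show ?thesis using y[of j] 2 X0 by (auto simp: Y_def)
    next
      case 3 then show ?thesis using y[of i] Xle[of i "Suc n"] Xn by (auto simp: Y_def)
    next
      case 4
      have "X i \<le> X (j-1)" using Xle[of i "j-1"] 4 that by auto
      then show ?thesis using y[of i] y[of j] 4 that by (auto simp: Y_def)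
    qed
  qed
  have Yroot: "?P (Y i) = 0" if "i \<in> {1..Suc n}" for i using y[OF that] that by (auto simp: Y_def)
  have inj: "inj_on Y {1..Suc n}"
    by (rule inj_strict) (use Ymono in auto)
  have cardY: "card (Y ` {1..Suc n}) = Suc n" using card_image[OF inj] by simp
  have allroots: "\<exists>j\<in>{1..Suc n}. r = Y j" if "?P r = 0" for r
  proof -
    have "r \<in> Y ` {1..Suc n}"
      using roots_all[of "LP (Suc n)" "Y ` {1..Suc n}" r] LP_nz LP_deg[of "Suc n"] cardY Yroot that
      by (auto simp: legendre_LP)
    then show ?thesis by auto
  qed
  have "interl (Suc n) Y"
    unfolding interl_def
  proof (intro conjI allI impI ballI)
    show "Y 0 = -1" "Y (Suc (Suc n)) = 1" by (auto simp: Y_def)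
  next
    fix i j :: nat assume "i < j" "j \<le> Suc (Suc n)" then show "Y i < Y j" by (rule Ymono)
  next
    fix i assume i: "i \<in> {1..Suc n}"
    show "?P (Y i) = 0" using Yroot[OF i] .
    have "X (i-1) < Y i" "Y i < X (Suc (i-1))" using y[OF i] i by (auto simp: Y_def)
    moreover have h: "\<forall>i\<le>n. \<forall>t. X i < t \<longrightarrow> t < X (Suc i) \<longrightarrow> (-1)^(n-i) * legendre n t > 0" using I by blast
    ultimately have "(-1)^(n-(i-1)) * legendre n (Y i) > 0" using i h[rule_format, of "i-1" "Y i"] by auto
    moreover have "n - (i-1) = Suc n - i" using i by auto
    ultimately show "(-1)^(Suc n - i) * legendre (Suc n - 1) (Y i) > 0" by simp
  next
    fix i t assume i: "i \<le> Suc n" and t: "Y i < t" "t < Y (Suc i)"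
    have XiL: "Y i \<le> X i"
      using y[of i] i X0 by (cases "i = 0") (auto simp: Y_def)
    have XiR: "X i \<le> Y (Suc i)"
      using y[of "Suc i"] i Xn by (cases "i = Suc n") (auto simp: Y_def)
    have "?P t * ?P (X i) > 0"
    proof (rule sign_const[where f="legendre (Suc n)"])
      show "continuous_on UNIV ?P" by (rule legendre_cont)
      fix x assume x: "min t (X i) \<le> x" "x \<le> max t (X i)"
      show "?P x \<noteq> 0"
      proof
        assume "?P x = 0"
        then obtain j where j: "j \<in> {1..Suc n}" "x = Y j" using allroots by blast
        have "x \<noteq> X i" using sgn[OF i] \<open>?P x = 0\<close> by auto
        then have "Y i < x \<and> x < Y (Suc i)" using x t XiL XiR by auto
        moreover have "Y j \<le> Y i" if "j \<le> i" using Ymono[of j i] that i by (cases "j = i") auto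
        moreover have "Y (Suc i) \<le> Y j" if "Suc i \<le> j" using Ymono[of "Suc i" j] that j by (cases "j = Suc i") auto
        ultimately show False using j by linarith
      qed
    qed
    then show "(-1)^(Suc n - i) * ?P t > 0" using sgn[OF i]
    proof -
      have "(-1::real)^(Suc n - i) = 1 \<or> (-1::real)^(Suc n - i) = -1" by (cases "even (Suc n - i)") auto
      then show ?thesis using \<open>?P t * ?P (X i) > 0\<close> sgn[OF i] by (auto simp: zero_less_mult_iff)
    qed
  qed
  then show ?thesis by blast
qed

lemma interl_ex: "1 \<le> n \<Longrightarrow> \<exists>X. interl n X"
proof (induction n rule: dec_induct)
  case base then show ?case using interl_base by simp
next
  case (step n) then show ?case using interl_step by blast
qed

lemma gl_nodes_finite: "finite (gl_nodes l)"
proof -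
  have "gl_nodes l \<subseteq> {x. poly (LP (Suc l)) x = 0}" by (auto simp: gl_nodes_def legendre_LP)
  then show ?thesis using poly_roots_finite[OF LP_nz] finite_subset by blast
qed

lemma gl_nodes_sub: "\<exists>S \<subseteq> gl_nodes l. card S = Suc l"
proof -
  obtain X where I: "interl (Suc l) X" using interl_ex[of "Suc l"] by auto
  note I = I[unfolded interl_def]
  have inj: "inj_on X {1..Suc l}"
    by (rule inj_strict) (use I in auto)
  have "X ` {1..Suc l} \<subseteq> gl_nodes l"
  proof
    fix x assume "x \<in> X ` {1..Suc l}"
    then obtain i where i: "i \<in> {1..Suc l}" "x = X i" by auto
    have m: "\<forall>i j. i < j \<longrightarrow> j \<le> Suc (Suc l) \<longrightarrow> X i < X j" using I by blast
    have "X 0 < X i" "X i < X (Suc (Suc l))" using m[rule_format, of 0 i] m[rule_format, of i "Suc (Suc l)"] i by auto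
    then have "-1 < X i" "X i < 1" using I by auto
    then show "x \<in> gl_nodes l" using I i by (auto simp: gl_nodes_def)
  qed
  moreover have "card (X ` {1..Suc l}) = Suc l" using card_image[OF inj] by simp
  ultimately show ?thesis by blast
qed

lemma gl_nodes_bound: "t \<in> gl_nodes l \<Longrightarrow> \<bar>t\<bar> \<le> 1"
  by (auto simp: gl_nodes_def)

definition E :: "real poly poly \<Rightarrow> real \<Rightarrow> real \<Rightarrow> real" where
  "E Q s w = poly (poly Q [:w:]) s"

lemma E_pCons [simp]: "E (pCons c Q) s w = poly c s + w * E Q s w"
  by (simp add: E_def)
lemma E_0 [simp]: "E 0 s w = 0" by (simp add: E_def)
lemma E_add [simp]: "E (P + Q) s w = E P s w + E Q s w" by (simp add: E_def)
lemma E_mult [simp]: "E (P * Q) s w = E P s w * E Q s w" by (simp add: E_def)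
lemma E_1 [simp]: "E 1 s w = 1" by (simp add: E_def)
lemma E_power [simp]: "E (P ^ n) s w = E P s w ^ n" by (induction n) auto
lemma E_sum: "E (\<Sum>i\<in>A. P i) s w = (\<Sum>i\<in>A. E (P i) s w)"
  by (simp add: E_def poly_sum)

lemma E_expand:
  assumes "degree Q \<le> N"
  shows "E Q s w = (\<Sum>n\<le>N. poly (coeff Q n) s * w ^ n)"
proof -
  have "poly Q [:w:] = (\<Sum>i\<le>degree Q. coeff Q i * [:w:] ^ i)" by (rule poly_altdef)
  also have "\<dots> = (\<Sum>i\<le>N. coeff Q i * [:w:] ^ i)"
    by (rule sum.mono_neutral_left) (use assms le_degree in auto)
  finally show ?thesis by (simp add: E_def poly_sum poly_power mult.commute)
qed

definition Ds :: "real poly poly \<Rightarrow> real poly poly" where "Ds Q = map_poly pderiv Q"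

lemma Ds_pCons [simp]: "Ds (pCons c Q) = pCons (pderiv c) (Ds Q)"
  by (simp add: Ds_def map_poly_pCons)
lemma Ds_0 [simp]: "Ds 0 = 0" by (simp add: Ds_def)

lemma coeff_Ds: "coeff (Ds Q) n = pderiv (coeff Q n)"
  by (simp add: Ds_def coeff_map_poly)

lemma E_has_derivative:
  fixes \<sigma> \<omega> :: "'a::real_normed_vector \<Rightarrow> real"
  assumes "(\<sigma> has_derivative \<sigma>') (at x)" "(\<omega> has_derivative \<omega>') (at x)"
  shows "((\<lambda>x. E Q (\<sigma> x) (\<omega> x)) has_derivative
     (\<lambda>e. E (Ds Q) (\<sigma> x) (\<omega> x) * \<sigma>' e + E (pderiv Q) (\<sigma> x) (\<omega> x) * \<omega>' e)) (at x)"
proof (induction Q rule: pCons_induct)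
  case 0
  then show ?case by simp
next
  case (pCons c Q)
  have "((\<lambda>x. poly c (\<sigma> x) + \<omega> x * E Q (\<sigma> x) (\<omega> x)) has_derivative
     (\<lambda>e. \<sigma>' e * poly (pderiv c) (\<sigma> x) + (\<omega> x * (E (Ds Q) (\<sigma> x) (\<omega> x) * \<sigma>' e + E (pderiv Q) (\<sigma> x) (\<omega> x) * \<omega>' e)
        + \<omega>' e * E Q (\<sigma> x) (\<omega> x)))) (at x)"
    by (intro has_derivative_add has_derivative_mult DERIV_compose_FDERIV poly_DERIV assms pCons.IH)
  note h = this
  have eq: "(\<lambda>x. E (pCons c Q) (\<sigma> x) (\<omega> x)) = (\<lambda>x. poly c (\<sigma> x) + \<omega> x * E Q (\<sigma> x) (\<omega> x))"
    by simp
  show ?case unfolding eq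
    by (rule has_derivative_eq_rhs[OF h]) (auto simp: fun_eq_iff pderiv_pCons algebra_simps)
qed

lemma poly_pochhammer: "poly (pochhammer p j) s = pochhammer (poly p s) j"
  by (induction j) (simp_all add: pochhammer_Suc)

lemma E_higher_pderiv:
  assumes "degree Q \<le> N"
  shows "E ((pderiv ^^ j) Q) s w = (\<Sum>n\<le>N. pochhammer (real (Suc n)) j * poly (coeff Q (n + j)) s * w ^ n)"
proof -
  have "degree ((pderiv ^^ j) Q) \<le> N"
  proof (induction j)
    case (Suc j) then show ?case by (simp add: degree_pderiv)
  qed (use assms in simp)
  then have "E ((pderiv ^^ j) Q) s w = (\<Sum>n\<le>N. poly (coeff ((pderiv ^^ j) Q) n) s * w ^ n)"
    by (rule E_expand)
  also have "\<dots> = (\<Sum>n\<le>N. pochhammer (real (Suc n)) j * poly (coeff Q (n + j)) s * w ^ n)"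
    by (simp add: coeff_higher_pderiv poly_pochhammer)
  finally show ?thesis .
qed

definition tdeg :: "nat \<Rightarrow> real poly poly \<Rightarrow> bool" where
  "tdeg k Q \<longleftrightarrow> (\<forall>b. coeff Q b = 0 \<or> degree (coeff Q b) + b \<le> k)"

lemma tdeg_coeff_0: "tdeg k Q \<Longrightarrow> k < b \<Longrightarrow> coeff Q b = 0"
  unfolding tdeg_def by force

lemma tdeg_degree: "tdeg k Q \<Longrightarrow> degree Q \<le> k"
  using tdeg_coeff_0 by (intro degree_le) blast

lemma tdeg_coeff_deg:
  assumes "tdeg k Q" shows "degree (coeff Q b) \<le> k - b"
proof (cases "coeff Q b = 0")
  case False
  with assms have "degree (coeff Q b) + b \<le> k" unfolding tdeg_def by blast
  then show ?thesis by arith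
qed simp

lemma tdeg_mono: "tdeg k Q \<Longrightarrow> k \<le> k' \<Longrightarrow> tdeg k' Q"
  unfolding tdeg_def by force

lemma tdeg_add:
  assumes P: "tdeg k P" and Q: "tdeg k Q" shows "tdeg k (P + Q)"
  unfolding tdeg_def
proof
  fix b
  show "coeff (P + Q) b = 0 \<or> degree (coeff (P + Q) b) + b \<le> k"
  proof (cases "b \<le> k")
    case True
    have "degree (coeff (P + Q) b) \<le> k - b"
      using degree_add_le_max[of "coeff P b" "coeff Q b"] tdeg_coeff_deg[OF P, of b] tdeg_coeff_deg[OF Q, of b]
      by simp
    then show ?thesis using True by arith
  next
    case False
    then show ?thesis using tdeg_coeff_0[OF P, of b] tdeg_coeff_0[OF Q, of b] by simp
  qed
qed

lemma tdeg_sum: "finite A \<Longrightarrow> (\<And>i. i \<in> A \<Longrightarrow> tdeg k (P i)) \<Longrightarrow> tdeg k (\<Sum>i\<in>A. P i)"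
proof (induction A rule: finite_induct)
  case empty then show ?case by (simp add: tdeg_def)
next
  case (insert x F) then show ?case by (simp add: tdeg_add)
qed

lemma tdeg_mult:
  assumes P: "tdeg k1 P" and Q: "tdeg k2 Q"
  shows "tdeg (k1 + k2) (P * Q)"
  unfolding tdeg_def
proof
  fix n
  show "coeff (P * Q) n = 0 \<or> degree (coeff (P * Q) n) + n \<le> k1 + k2"
  proof (cases "n \<le> k1 + k2")
    case False
    have "coeff P i * coeff Q (n - i) = 0" if "i \<le> n" for i
      using tdeg_coeff_0[OF P, of i] tdeg_coeff_0[OF Q, of "n-i"] False that by force
    then have "coeff (P * Q) n = 0" unfolding coeff_mult by (intro sum.neutral) auto
    then show ?thesis by simp
  next
    case True
    have "degree (coeff P i * coeff Q (n - i)) \<le> k1 + k2 - n" if "i \<le> n" for i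
    proof (cases "coeff P i = 0 \<or> coeff Q (n - i) = 0")
      case True then show ?thesis by auto
    next
      case False
      then have "degree (coeff P i) + i \<le> k1" "degree (coeff Q (n-i)) + (n - i) \<le> k2"
        using P Q unfolding tdeg_def by blast+
      then show ?thesis using degree_mult_le[of "coeff P i" "coeff Q (n - i)"] that by linarith
    qed
    then have "degree (coeff (P * Q) n) \<le> k1 + k2 - n"
      unfolding coeff_mult by (intro degree_sum_le) auto
    then show ?thesis using True by arith
  qed
qed

lemma tdeg_const: "tdeg 0 [:[:c:]:]"
  by (simp add: tdeg_def coeff_pCons split: nat.splits)

lemma tdeg_power: "tdeg k P \<Longrightarrow> tdeg (k * n) (P ^ n)"
proof (induction n)
  case 0 then show ?case using tdeg_const[of 1] by (simp add: one_pCons)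
next
  case (Suc n)
  then show ?case using tdeg_mult[of k P "k * n" "P ^ n"] by (simp add: add.commute)
qed

lemma tdeg_affine: "tdeg 1 [:[:\<alpha>, \<beta>:], [:\<gamma>:]:]"
  unfolding tdeg_def
proof
  fix b :: nat
  show "coeff [:[:\<alpha>, \<beta>:], [:\<gamma>:]:] b = 0 \<or> degree (coeff [:[:\<alpha>, \<beta>:], [:\<gamma>:]:] b) + b \<le> 1"
    by (cases b) (auto simp: coeff_pCons split: nat.splits)
qed

lemma E_affine: "E [:[:\<alpha>, \<beta>:], [:\<gamma>:]:] s w = \<alpha> + \<beta> * s + \<gamma> * w"
  by (simp add: algebra_simps)

lemma E_const: "E [:[:c:]:] s w = c" by simp

lemma poly_bound:
  fixes q :: "real poly"
  assumes "degree q \<le> d"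
  shows "\<bar>poly q s\<bar> \<le> (\<Sum>i\<le>d. \<bar>coeff q i\<bar>) * (1 + \<bar>s\<bar>) ^ d"
proof -
  have "poly q s = (\<Sum>i\<le>degree q. coeff q i * s ^ i)" by (rule poly_altdef)
  also have "\<dots> = (\<Sum>i\<le>d. coeff q i * s ^ i)"
    by (rule sum.mono_neutral_left) (use assms le_degree in auto)
  finally have "\<bar>poly q s\<bar> \<le> (\<Sum>i\<le>d. \<bar>coeff q i * s ^ i\<bar>)" by (simp add: sum_abs)
  also have "\<dots> \<le> (\<Sum>i\<le>d. \<bar>coeff q i\<bar> * (1 + \<bar>s\<bar>) ^ d)"
  proof (rule sum_mono)
    fix i assume "i \<in> {..d}"
    have "\<bar>s\<bar> ^ i \<le> (1 + \<bar>s\<bar>) ^ i" by (rule power_mono) auto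
    also have "\<dots> \<le> (1 + \<bar>s\<bar>) ^ d" using \<open>i \<in> {..d}\<close> by (intro power_increasing) auto
    finally show "\<bar>coeff q i * s ^ i\<bar> \<le> \<bar>coeff q i\<bar> * (1 + \<bar>s\<bar>) ^ d"
      by (simp add: abs_mult power_abs mult_left_mono)
  qed
  also have "\<dots> = (\<Sum>i\<le>d. \<bar>coeff q i\<bar>) * (1 + \<bar>s\<bar>) ^ d" by (simp add: sum_distrib_right)
  finally show ?thesis .
qed

lemma lagrange:
  fixes S :: "real set"
  assumes fin: "finite S" and card: "card S = Suc n"
  shows "\<exists>K\<ge>0. \<forall>p. degree p \<le> n \<longrightarrow> (\<forall>s. \<bar>poly p s\<bar> \<le> K * (\<Sum>t\<in>S. \<bar>poly p t\<bar>) * (1 + \<bar>s\<bar>) ^ n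
      \<and> \<bar>poly (pderiv p) s\<bar> \<le> K * (\<Sum>t\<in>S. \<bar>poly p t\<bar>) * (1 + \<bar>s\<bar>) ^ (n - 1))"
proof -
  define L where "L t = (\<Prod>u\<in>S-{t}. smult (1/(t-u)) [:-u,1:])" for t
  have degL: "degree (L t) \<le> n" if "t \<in> S" for t
  proof -
    have "degree (L t) \<le> (\<Sum>u\<in>S-{t}. degree (smult (1/(t-u)) [:-u,1:]))"
      unfolding L_def by (rule degree_prod_sum_le[of "S-{t}", unfolded comp_def]) (simp add: fin)
    also have "\<dots> \<le> (\<Sum>u\<in>S-{t}. 1)" by (intro sum_mono) (simp add: degree_smult_le order_trans[OF degree_smult_le])
    also have "\<dots> = n" using card that fin by simp
    finally show ?thesis .
  qed
  have polyL: "poly (L t) t' = (if t' = t then 1 else 0)" if "t \<in> S" "t' \<in> S" for t t'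
  proof (cases "t' = t")
    case True
    have "(\<Prod>u\<in>S-{t}. poly (smult (1/(t-u)) [:-u,1:]) t) = (\<Prod>u\<in>S-{t}. (1::real))"
    proof (intro prod.cong refl)
      fix u assume "u \<in> S - {t}"
      then have "t - u \<noteq> 0" by auto
      have "poly [:-u,1:] t = t - u" by simp
      then show "poly (smult (1/(t-u)) [:-u,1:]) t = 1" unfolding poly_smult using \<open>t - u \<noteq> 0\<close>
        by (metis nonzero_eq_divide_eq divide_divide_eq_right divide_self_if mult.commute times_divide_eq_right)
    qed
    then show ?thesis using True by (simp add: L_def poly_prod del: poly_smult)
  next
    case False
    then have "t' \<in> S - {t}" using that by auto
    then have "(\<Prod>u\<in>S-{t}. poly (smult (1/(t-u)) [:-u,1:]) t') = 0"
      using fin by (intro prod_zero) auto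
    then show ?thesis using False by (simp add: L_def poly_prod)
  qed
  have repr: "p = (\<Sum>t\<in>S. smult (poly p t) (L t))" if "degree p \<le> n" for p
  proof (rule poly_eqI_degree[of S])
    fix x assume "x \<in> S"
    have "poly (\<Sum>t\<in>S. smult (poly p t) (L t)) x = (\<Sum>t\<in>S. poly p t * (if x = t then 1 else 0))"
      by (simp add: poly_sum polyL \<open>x \<in> S\<close> cong: sum.cong)
    also have "\<dots> = poly p x" using fin \<open>x \<in> S\<close> by (simp add: if_distrib cong: if_cong)
    finally show "poly p x = poly (\<Sum>t\<in>S. smult (poly p t) (L t)) x" by simp
  next
    show "degree p < card S" using that card by simp
    have "degree (\<Sum>t\<in>S. smult (poly p t) (L t)) \<le> n"
      using fin by (intro degree_sum_le) (auto intro: order_trans[OF degree_smult_le] degL)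
    then show "degree (\<Sum>t\<in>S. smult (poly p t) (L t)) < card S" using card by simp
  qed
  define cL where "cL t = (\<Sum>i\<le>n. \<bar>coeff (L t) i\<bar>) + (\<Sum>i\<le>n-1. \<bar>coeff (pderiv (L t)) i\<bar>)" for t
  define K where "K = (\<Sum>t\<in>S. cL t)"
  have cL0: "cL t \<ge> 0" for t unfolding cL_def by (intro add_nonneg_nonneg sum_nonneg) auto
  have K0: "K \<ge> 0" unfolding K_def using cL0 by (simp add: sum_nonneg)
  have cLK: "cL t \<le> K" if "t \<in> S" for t
    unfolding K_def using that fin cL0 by (intro member_le_sum) auto
  have b1: "\<bar>poly (L t) s\<bar> \<le> K * (1 + \<bar>s\<bar>) ^ n" if "t \<in> S" for t s
  proof -
    have "\<bar>poly (L t) s\<bar> \<le> (\<Sum>i\<le>n. \<bar>coeff (L t) i\<bar>) * (1 + \<bar>s\<bar>) ^ n"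
      by (rule poly_bound[OF degL[OF that]])
    also have "\<dots> \<le> K * (1 + \<bar>s\<bar>) ^ n"
    proof (intro mult_right_mono)
      have nn: "0 \<le> (\<Sum>i\<le>n-1. \<bar>coeff (pderiv (L t)) i\<bar>)" by (intro sum_nonneg) auto
      show "(\<Sum>i\<le>n. \<bar>coeff (L t) i\<bar>) \<le> K" using cLK[OF that] nn unfolding cL_def by linarith
    qed auto
    finally show ?thesis .
  qed
  have b2: "\<bar>poly (pderiv (L t)) s\<bar> \<le> K * (1 + \<bar>s\<bar>) ^ (n - 1)" if "t \<in> S" for t s
  proof -
    have "degree (pderiv (L t)) \<le> n - 1" using degL[OF that] by (simp add: degree_pderiv)
    then have "\<bar>poly (pderiv (L t)) s\<bar> \<le> (\<Sum>i\<le>n-1. \<bar>coeff (pderiv (L t)) i\<bar>) * (1 + \<bar>s\<bar>) ^ (n - 1)"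
      by (rule poly_bound)
    also have "\<dots> \<le> K * (1 + \<bar>s\<bar>) ^ (n - 1)"
    proof (intro mult_right_mono)
      have nn: "0 \<le> (\<Sum>i\<le>n. \<bar>coeff (L t) i\<bar>)" by (intro sum_nonneg) auto
      show "(\<Sum>i\<le>n-1. \<bar>coeff (pderiv (L t)) i\<bar>) \<le> K" using cLK[OF that] nn unfolding cL_def by linarith
    qed auto
    finally show ?thesis .
  qed
  have "\<forall>p. degree p \<le> n \<longrightarrow> (\<forall>s. \<bar>poly p s\<bar> \<le> K * (\<Sum>t\<in>S. \<bar>poly p t\<bar>) * (1 + \<bar>s\<bar>) ^ n
      \<and> \<bar>poly (pderiv p) s\<bar> \<le> K * (\<Sum>t\<in>S. \<bar>poly p t\<bar>) * (1 + \<bar>s\<bar>) ^ (n - 1))"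
  proof (intro allI impI conjI)
    fix p :: "real poly" and s assume p: "degree p \<le> n"
    have "poly p s = (\<Sum>t\<in>S. poly p t * poly (L t) s)"
      by (subst repr[OF p]) (simp add: poly_sum)
    then have "\<bar>poly p s\<bar> \<le> (\<Sum>t\<in>S. \<bar>poly p t\<bar> * \<bar>poly (L t) s\<bar>)"
      using sum_abs[of "\<lambda>t. poly p t * poly (L t) s" S] by (simp add: abs_mult)
    also have "\<dots> \<le> (\<Sum>t\<in>S. \<bar>poly p t\<bar> * (K * (1 + \<bar>s\<bar>) ^ n))"
      by (intro sum_mono mult_left_mono b1) auto
    also have "\<dots> = K * (\<Sum>t\<in>S. \<bar>poly p t\<bar>) * (1 + \<bar>s\<bar>) ^ n"
      by (simp add: sum_distrib_right sum_distrib_left mult_ac)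
    finally show "\<bar>poly p s\<bar> \<le> K * (\<Sum>t\<in>S. \<bar>poly p t\<bar>) * (1 + \<bar>s\<bar>) ^ n" .
    have "pderiv p = (\<Sum>t\<in>S. smult (poly p t) (pderiv (L t)))"
      using arg_cong[OF repr[OF p], of pderiv] higher_pderiv_sum[of 1 "\<lambda>t. smult (poly p t) (L t)" S]
      by (simp add: pderiv_smult)
    then have "poly (pderiv p) s = (\<Sum>t\<in>S. poly p t * poly (pderiv (L t)) s)"
      by (simp add: poly_sum)
    then have "\<bar>poly (pderiv p) s\<bar> \<le> (\<Sum>t\<in>S. \<bar>poly p t\<bar> * \<bar>poly (pderiv (L t)) s\<bar>)"
      using sum_abs[of "\<lambda>t. poly p t * poly (pderiv (L t)) s" S] by (simp add: abs_mult)
    also have "\<dots> \<le> (\<Sum>t\<in>S. \<bar>poly p t\<bar> * (K * (1 + \<bar>s\<bar>) ^ (n - 1)))"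
      by (intro sum_mono mult_left_mono b2) auto
    also have "\<dots> = K * (\<Sum>t\<in>S. \<bar>poly p t\<bar>) * (1 + \<bar>s\<bar>) ^ (n - 1)"
      by (simp add: sum_distrib_right sum_distrib_left mult_ac)
    finally show "\<bar>poly (pderiv p) s\<bar> \<le> K * (\<Sum>t\<in>S. \<bar>poly p t\<bar>) * (1 + \<bar>s\<bar>) ^ (n - 1)" .
  qed
  then show ?thesis using K0 by blast
qed

lemma pow_bound:
  fixes R :: real
  assumes "1 \<le> R" "a + b \<le> k"
  shows "(1 + R) ^ a * R ^ b \<le> 2 ^ k * R ^ k"
proof -
  have "(1 + R) ^ a \<le> (2 * R) ^ a" using assms by (intro power_mono) auto
  then have "(1 + R) ^ a * R ^ b \<le> (2 * R) ^ a * R ^ b" using assms by (intro mult_right_mono) auto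
  also have "\<dots> = 2 ^ a * R ^ (a + b)" by (simp add: power_mult_distrib power_add)
  also have "\<dots> \<le> 2 ^ k * R ^ k"
    using assms by (intro mult_mono power_increasing) auto
  finally show ?thesis .
qed

definition Phi :: "nat \<Rightarrow> (nat \<Rightarrow> real set) \<Rightarrow> real poly poly \<Rightarrow> (nat \<Rightarrow> real \<Rightarrow> real) \<Rightarrow> real" where
  "Phi k S Q \<delta> = (\<Sum>l\<le>k. \<Sum>t\<in>S l. \<bar>E ((pderiv ^^ (k - l)) Q) t (\<delta> l t)\<bar>)"

definition Bc :: "nat \<Rightarrow> (nat \<Rightarrow> real set) \<Rightarrow> real poly poly \<Rightarrow> nat \<Rightarrow> real" where
  "Bc k S Q b = (\<Sum>t\<in>S (k - b). \<bar>poly (coeff Q b) t\<bar>)"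

lemma Phi_nonneg: "Phi k S Q \<delta> \<ge> 0" unfolding Phi_def by (intro sum_nonneg) auto
lemma Bc_nonneg: "Bc k S Q b \<ge> 0" unfolding Bc_def by (intro sum_nonneg) auto
lemma Bc_zero: "tdeg k Q \<Longrightarrow> k < b \<Longrightarrow> Bc k S Q b = 0"
  unfolding Bc_def by (simp add: tdeg_coeff_0)

context
  fixes S :: "nat \<Rightarrow> real set" and k :: nat and K :: "nat \<Rightarrow> real"
  assumes fin: "\<And>l. finite (S l)" and card: "\<And>l. card (S l) = Suc l" and bnd: "\<And>l t. t \<in> S l \<Longrightarrow> \<bar>t\<bar> \<le> 1"
    and K0: "\<And>l. K l \<ge> 0"
    and KL: "\<And>l p s. degree p \<le> l \<Longrightarrow> \<bar>poly p s\<bar> \<le> K l * (\<Sum>t\<in>S l. \<bar>poly p t\<bar>) * (1 + \<bar>s\<bar>) ^ l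
                 \<and> \<bar>poly (pderiv p) s\<bar> \<le> K l * (\<Sum>t\<in>S l. \<bar>poly p t\<bar>) * (1 + \<bar>s\<bar>) ^ (l - 1)"
begin

definition "Km = (\<Sum>l\<le>k. K l)"

lemma Km_ge: "l \<le> k \<Longrightarrow> K l \<le> Km"
  unfolding Km_def using K0 by (intro member_le_sum) auto

lemma Km_nonneg: "Km \<ge> 0" unfolding Km_def using K0 by (simp add: sum_nonneg)

lemma LagB:
  assumes "tdeg k Q" "b \<le> k"
  shows "\<bar>poly (coeff Q b) s\<bar> \<le> Km * Bc k S Q b * (1 + \<bar>s\<bar>) ^ (k - b)"
    and "\<bar>poly (pderiv (coeff Q b)) s\<bar> \<le> Km * Bc k S Q b * (1 + \<bar>s\<bar>) ^ (k - b - 1)"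
proof -
  have d: "degree (coeff Q b) \<le> k - b" by (rule tdeg_coeff_deg[OF assms(1)])
  have KK: "K (k - b) \<le> Km" by (rule Km_ge) simp
  define \<Sigma> where "\<Sigma> = (\<Sum>t\<in>S (k - b). \<bar>poly (coeff Q b) t\<bar>)"
  have eq: "Bc k S Q b = \<Sigma>" by (simp add: Bc_def \<Sigma>_def)
  have S0: "\<Sigma> \<ge> 0" unfolding \<Sigma>_def by (intro sum_nonneg) auto
  have a: "\<bar>poly (coeff Q b) s\<bar> \<le> K (k - b) * \<Sigma> * (1 + \<bar>s\<bar>) ^ (k - b)"
    and a2: "\<bar>poly (pderiv (coeff Q b)) s\<bar> \<le> K (k - b) * \<Sigma> * (1 + \<bar>s\<bar>) ^ (k - b - 1)"
    using KL[OF d, of s] unfolding \<Sigma>_def by auto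
  have "K (k - b) * \<Sigma> * (1 + \<bar>s\<bar>) ^ (k - b) \<le> Km * \<Sigma> * (1 + \<bar>s\<bar>) ^ (k - b)"
    using KK S0 by (intro mult_right_mono) auto
  then show "\<bar>poly (coeff Q b) s\<bar> \<le> Km * Bc k S Q b * (1 + \<bar>s\<bar>) ^ (k - b)"
    unfolding eq using a by linarith
  have "K (k - b) * \<Sigma> * (1 + \<bar>s\<bar>) ^ (k - b - 1) \<le> Km * \<Sigma> * (1 + \<bar>s\<bar>) ^ (k - b - 1)"
    using KK S0 by (intro mult_right_mono) auto
  then show "\<bar>poly (pderiv (coeff Q b)) s\<bar> \<le> Km * Bc k S Q b * (1 + \<bar>s\<bar>) ^ (k - b - 1)"
    unfolding eq using a2 by linarith
qed

lemma LagB2: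
  assumes "tdeg k Q" "\<bar>t\<bar> \<le> 1"
  shows "\<bar>poly (coeff Q b) t\<bar> \<le> Km * Bc k S Q b * 2 ^ k"
proof (cases "b \<le> k")
  case True
  have "(1 + \<bar>t\<bar>) ^ (k - b) \<le> 2 ^ (k - b)" using assms by (intro power_mono) auto
  also have "\<dots> \<le> 2 ^ k" by (intro power_increasing) auto
  finally have "Km * Bc k S Q b * (1 + \<bar>t\<bar>) ^ (k - b) \<le> Km * Bc k S Q b * 2 ^ k"
    using Km_nonneg Bc_nonneg by (intro mult_left_mono) auto
  then show ?thesis using LagB(1)[OF assms(1) True, of t] by linarith
next
  case False
  then show ?thesis using tdeg_coeff_0[OF assms(1)] Bc_zero[OF assms(1)] by simp
qed

definition "A n j = real (Suc k) * pochhammer (real (Suc n)) j * Km * 2 ^ k * 2 ^ n"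

lemma A_nonneg: "A n j \<ge> 0"
  unfolding A_def using Km_nonneg by (simp add: pochhammer_pos less_imp_le)

lemma recursion:
  assumes Q: "tdeg k Q" and \<delta>: "\<forall>l\<le>k. \<forall>t\<in>S l. \<bar>\<delta> l t\<bar> \<le> 2" and j: "j \<le> k"
  shows "Bc k S Q j \<le> Phi k S Q \<delta> + (\<Sum>n\<in>{1..k}. A n j * Bc k S Q (n + j))"
proof -
  define l where "l = k - j"
  have l: "l \<le> k" "k - l = j" using j by (auto simp: l_def)
  define ev where "ev t = E ((pderiv ^^ j) Q) t (\<delta> l t)" for t
  have pt: "\<bar>poly (coeff Q j) t\<bar> \<le> \<bar>ev t\<bar> + (\<Sum>n\<in>{1..k}. pochhammer (real (Suc n)) j * (Km * Bc k S Q (n + j) * 2 ^ k) * 2 ^ n)"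
    if t: "t \<in> S l" for t
  proof -
    have dQ: "degree Q \<le> k" by (rule tdeg_degree[OF Q])
    have "ev t = (\<Sum>n\<le>k. pochhammer (real (Suc n)) j * poly (coeff Q (n + j)) t * \<delta> l t ^ n)"
      unfolding ev_def by (rule E_higher_pderiv[OF dQ])
    also have "{..k} = insert 0 {1..k}" by auto
    finally have ev: "ev t = fact j * poly (coeff Q j) t + (\<Sum>n\<in>{1..k}. pochhammer (real (Suc n)) j * poly (coeff Q (n + j)) t * \<delta> l t ^ n)"
      by (simp add: pochhammer_fact)
    have dl: "\<bar>\<delta> l t\<bar> \<le> 2" using \<delta> l t by auto
    have tb: "\<bar>t\<bar> \<le> 1" using bnd t by auto
    have "\<bar>(\<Sum>n\<in>{1..k}. pochhammer (real (Suc n)) j * poly (coeff Q (n + j)) t * \<delta> l t ^ n)\<bar>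
        \<le> (\<Sum>n\<in>{1..k}. \<bar>pochhammer (real (Suc n)) j * poly (coeff Q (n + j)) t * \<delta> l t ^ n\<bar>)"
      by (rule sum_abs)
    also have "\<dots> \<le> (\<Sum>n\<in>{1..k}. pochhammer (real (Suc n)) j * (Km * Bc k S Q (n + j) * 2 ^ k) * 2 ^ n)"
    proof (rule sum_mono)
      fix n assume "n \<in> {1..k}"
      have p0: "pochhammer (real (Suc n)) j \<ge> 0" by (simp add: pochhammer_pos less_imp_le)
      have "\<bar>\<delta> l t ^ n\<bar> \<le> 2 ^ n" unfolding power_abs using dl by (intro power_mono) auto
      then show "\<bar>pochhammer (real (Suc n)) j * poly (coeff Q (n + j)) t * \<delta> l t ^ n\<bar>
          \<le> pochhammer (real (Suc n)) j * (Km * Bc k S Q (n + j) * 2 ^ k) * 2 ^ n"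
        unfolding abs_mult using p0 LagB2[OF Q tb, of "n + j"]
        by (intro mult_mono) (auto simp: mult_nonneg_nonneg Km_nonneg Bc_nonneg)
    qed
    finally have rest: "\<bar>(\<Sum>n\<in>{1..k}. pochhammer (real (Suc n)) j * poly (coeff Q (n + j)) t * \<delta> l t ^ n)\<bar>
        \<le> (\<Sum>n\<in>{1..k}. pochhammer (real (Suc n)) j * (Km * Bc k S Q (n + j) * 2 ^ k) * 2 ^ n)" .
    have "\<bar>poly (coeff Q j) t\<bar> \<le> fact j * \<bar>poly (coeff Q j) t\<bar>"
      using fact_ge_1[of j] by (simp add: mult_le_cancel_right1)
    also have "\<dots> = \<bar>fact j * poly (coeff Q j) t\<bar>" by (simp add: abs_mult)
    also have "\<dots> \<le> \<bar>ev t\<bar> + \<bar>(\<Sum>n\<in>{1..k}. pochhammer (real (Suc n)) j * poly (coeff Q (n + j)) t * \<delta> l t ^ n)\<bar>"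
      using ev by linarith
    finally show ?thesis using rest by linarith
  qed
  define Rj where "Rj = (\<Sum>n\<in>{1..k}. pochhammer (real (Suc n)) j * (Km * Bc k S Q (n + j) * 2 ^ k) * 2 ^ n)"
  have Rj0: "Rj \<ge> 0" unfolding Rj_def
    by (intro sum_nonneg) (auto simp: pochhammer_pos less_imp_le Km_nonneg Bc_nonneg)
  have "Bc k S Q j = (\<Sum>t\<in>S l. \<bar>poly (coeff Q j) t\<bar>)" by (simp add: Bc_def l_def)
  also have "\<dots> \<le> (\<Sum>t\<in>S l. \<bar>ev t\<bar> + Rj)" using pt unfolding Rj_def by (intro sum_mono) auto
  also have "\<dots> = (\<Sum>t\<in>S l. \<bar>ev t\<bar>) + real (Suc l) * Rj" by (simp add: sum.distrib card)
  also have "(\<Sum>t\<in>S l. \<bar>ev t\<bar>) \<le> Phi k S Q \<delta>"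
  proof -
    have "(\<Sum>t\<in>S l. \<bar>ev t\<bar>) = (\<Sum>t\<in>S l. \<bar>E ((pderiv ^^ (k - l)) Q) t (\<delta> l t)\<bar>)" using l by (simp add: ev_def)
    also have "\<dots> \<le> Phi k S Q \<delta>" unfolding Phi_def
      using l by (intro member_le_sum[of l "{..k}" "\<lambda>l. \<Sum>t\<in>S l. \<bar>E ((pderiv ^^ (k - l)) Q) t (\<delta> l t)\<bar>"]) (auto intro: sum_nonneg)
    finally show ?thesis .
  qed
  also have "real (Suc l) * Rj \<le> real (Suc k) * Rj" using l Rj0 by (intro mult_right_mono) auto
  also have "real (Suc k) * Rj = (\<Sum>n\<in>{1..k}. A n j * Bc k S Q (n + j))"
    unfolding Rj_def A_def by (simp add: sum_distrib_left mult_ac)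
  finally show ?thesis by linarith
qed

definition "Amax = (\<Sum>j\<le>k. \<Sum>n\<in>{1..k}. A n j)"

lemma Amax_ge: "j \<le> k \<Longrightarrow> (\<Sum>n\<in>{1..k}. A n j) \<le> Amax"
  unfolding Amax_def using A_nonneg
  by (intro member_le_sum[of j "{..k}" "\<lambda>j. \<Sum>n\<in>{1..k}. A n j"]) (auto intro: sum_nonneg)

lemma Amax_nonneg: "Amax \<ge> 0" unfolding Amax_def using A_nonneg by (intro sum_nonneg) auto

lemma Bc_bound_m:
  "\<exists>C\<ge>0. \<forall>Q \<delta>. tdeg k Q \<longrightarrow> (\<forall>l\<le>k. \<forall>t\<in>S l. \<bar>\<delta> l t\<bar> \<le> 2) \<longrightarrow> (\<forall>b. k < b + m \<longrightarrow> Bc k S Q b \<le> C * Phi k S Q \<delta>)"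
proof (induction m)
  case 0
  show ?case by (intro exI[of _ 0]) (auto simp: Bc_zero)
next
  case (Suc m)
  then obtain C where C0: "C \<ge> 0" and C: "\<And>Q \<delta> b. tdeg k Q \<Longrightarrow> (\<forall>l\<le>k. \<forall>t\<in>S l. \<bar>\<delta> l t\<bar> \<le> 2) \<Longrightarrow> k < b + m \<Longrightarrow> Bc k S Q b \<le> C * Phi k S Q \<delta>"
    by blast
  define C' where "C' = C + 1 + C * Amax"
  have C'0: "C' \<ge> 0" unfolding C'_def using C0 Amax_nonneg by simp
  have "\<forall>Q \<delta>. tdeg k Q \<longrightarrow> (\<forall>l\<le>k. \<forall>t\<in>S l. \<bar>\<delta> l t\<bar> \<le> 2) \<longrightarrow> (\<forall>b. k < b + Suc m \<longrightarrow> Bc k S Q b \<le> C' * Phi k S Q \<delta>)"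
  proof (intro allI impI)
    fix Q and \<delta> :: "nat \<Rightarrow> real \<Rightarrow> real" and b assume Q: "tdeg k Q" and \<delta>: "\<forall>l\<le>k. \<forall>t\<in>S l. \<bar>\<delta> l t\<bar> \<le> 2" and b: "k < b + Suc m"
    have P0: "Phi k S Q \<delta> \<ge> 0" by (rule Phi_nonneg)
    have CC: "C * Phi k S Q \<delta> \<le> C' * Phi k S Q \<delta>"
      using P0 C0 Amax_nonneg by (intro mult_right_mono) (auto simp: C'_def)
    show "Bc k S Q b \<le> C' * Phi k S Q \<delta>"
    proof (cases "k < b + m")
      case True then show ?thesis using C[OF Q \<delta> True] CC by linarith
    next
      case False
      then have bk: "b \<le> k" and bm: "b + m = k" using b by auto
      have "Bc k S Q b \<le> Phi k S Q \<delta> + (\<Sum>n\<in>{1..k}. A n b * Bc k S Q (n + b))"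
        by (rule recursion[OF Q \<delta> bk])
      also have "(\<Sum>n\<in>{1..k}. A n b * Bc k S Q (n + b)) \<le> (\<Sum>n\<in>{1..k}. A n b * (C * Phi k S Q \<delta>))"
      proof (rule sum_mono)
        fix n assume "n \<in> {1..k}"
        then have "k < (n + b) + m" using bm by auto
        then show "A n b * Bc k S Q (n + b) \<le> A n b * (C * Phi k S Q \<delta>)"
          using C[OF Q \<delta>] A_nonneg by (intro mult_left_mono) auto
      qed
      also have "\<dots> = (\<Sum>n\<in>{1..k}. A n b) * (C * Phi k S Q \<delta>)" by (simp add: sum_distrib_right)
      also have "\<dots> \<le> Amax * (C * Phi k S Q \<delta>)"
        using Amax_ge[OF bk] C0 P0 by (intro mult_right_mono) auto
      finally have "Bc k S Q b \<le> Phi k S Q \<delta> + Amax * (C * Phi k S Q \<delta>)" by linarith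
      also have "\<dots> \<le> C' * Phi k S Q \<delta>"
        using P0 C0 by (simp add: C'_def algebra_simps)
      finally show ?thesis .
    qed
  qed
  then show ?case using C'0 by blast
qed

lemma Bc_bound:
  "\<exists>C\<ge>0. \<forall>Q \<delta> b. tdeg k Q \<longrightarrow> (\<forall>l\<le>k. \<forall>t\<in>S l. \<bar>\<delta> l t\<bar> \<le> 2) \<longrightarrow> Bc k S Q b \<le> C * Phi k S Q \<delta>"
  using Bc_bound_m[of "Suc k"] by auto


lemma term_bound:
  fixes R X Y C0 P :: real
  assumes "1 \<le> R" "a + b' \<le> k" "0 \<le> X" "X \<le> Km * Bc k S Q b * (1 + R) ^ a" "0 \<le> Y" "Y \<le> R ^ b'"
    "Bc k S Q b \<le> C0 * P" "C0 \<ge> 0" "P \<ge> 0"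
  shows "X * Y \<le> Km * C0 * P * 2 ^ k * R ^ k"
proof -
  have "X * Y \<le> (Km * Bc k S Q b * (1 + R) ^ a) * R ^ b'"
    using assms by (intro mult_mono) auto
  also have "\<dots> \<le> (Km * (C0 * P) * (1 + R) ^ a) * R ^ b'"
    using assms Km_nonneg by (intro mult_right_mono mult_left_mono) auto
  also have "\<dots> = (Km * C0 * P) * ((1 + R) ^ a * R ^ b')" by (simp add: mult_ac)
  also have "\<dots> \<le> (Km * C0 * P) * (2 ^ k * R ^ k)"
    using assms Km_nonneg pow_bound[of R a b' k] by (intro mult_left_mono) auto
  finally show ?thesis by (simp add: mult_ac)
qed

lemma final_bounds:
  "\<exists>C>0. \<forall>Q \<delta> R s w. tdeg k Q \<longrightarrow> (\<forall>l\<le>k. \<forall>t\<in>S l. \<bar>\<delta> l t\<bar> \<le> 2) \<longrightarrow> 1 \<le> R \<longrightarrow> \<bar>s\<bar> \<le> R \<longrightarrow> \<bar>w\<bar> \<le> R \<longrightarrow>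
     \<bar>E Q s w\<bar> \<le> C * R ^ k * Phi k S Q \<delta> \<and> R * \<bar>E (Ds Q) s w\<bar> \<le> C * R ^ k * Phi k S Q \<delta>
     \<and> R * \<bar>E (pderiv Q) s w\<bar> \<le> C * R ^ k * Phi k S Q \<delta>"
proof -
  obtain C0 where C00: "C0 \<ge> 0" and C0: "\<And>Q \<delta> b. tdeg k Q \<Longrightarrow> (\<forall>l\<le>k. \<forall>t\<in>S l. \<bar>\<delta> l t\<bar> \<le> 2) \<Longrightarrow> Bc k S Q b \<le> C0 * Phi k S Q \<delta>"
    using Bc_bound by blast
  define M where "M = Km * C0 * 2 ^ k"
  have M0: "M \<ge> 0" unfolding M_def using C00 Km_nonneg by simp
  define C where "C = real (Suc k) * real (Suc k) * M + 1"
  have Cpos: "C > 0" unfolding C_def using M0 by (simp add: add_nonneg_pos)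
  have "\<forall>Q \<delta> R s w. tdeg k Q \<longrightarrow> (\<forall>l\<le>k. \<forall>t\<in>S l. \<bar>\<delta> l t\<bar> \<le> 2) \<longrightarrow> 1 \<le> R \<longrightarrow> \<bar>s\<bar> \<le> R \<longrightarrow> \<bar>w\<bar> \<le> R \<longrightarrow>
     \<bar>E Q s w\<bar> \<le> C * R ^ k * Phi k S Q \<delta> \<and> R * \<bar>E (Ds Q) s w\<bar> \<le> C * R ^ k * Phi k S Q \<delta>
     \<and> R * \<bar>E (pderiv Q) s w\<bar> \<le> C * R ^ k * Phi k S Q \<delta>"
  proof (intro allI impI)
    fix Q and \<delta> :: "nat \<Rightarrow> real \<Rightarrow> real" and R s w :: real
    assume Q: "tdeg k Q" and \<delta>: "\<forall>l\<le>k. \<forall>t\<in>S l. \<bar>\<delta> l t\<bar> \<le> 2" and R: "1 \<le> R" and s: "\<bar>s\<bar> \<le> R" and w: "\<bar>w\<bar> \<le> R"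
    define P where "P = Phi k S Q \<delta>"
    have P0: "P \<ge> 0" unfolding P_def by (rule Phi_nonneg)
    have B: "Bc k S Q b \<le> C0 * P" for b unfolding P_def by (rule C0[OF Q \<delta>])
    have dQ: "degree Q \<le> k" by (rule tdeg_degree[OF Q])
    have sR: "(1 + \<bar>s\<bar>) ^ n \<le> (1 + R) ^ n" for n using s by (intro power_mono) auto
    have wR: "\<bar>w\<bar> ^ n \<le> R ^ n" for n using w by (intro power_mono) auto
    have MP: "real (Suc k) * (M * P * R ^ k) \<le> C * R ^ k * P"
    proof -
      have "real (Suc k) * (M * P * R ^ k) \<le> real (Suc k) * real (Suc k) * (M * P * R ^ k)"
        using M0 P0 R by (intro mult_right_mono) (auto simp: mult_nonneg_nonneg)
      also have "\<dots> \<le> C * (P * R ^ k)" unfolding C_def using M0 P0 R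
        by (simp add: algebra_simps mult_nonneg_nonneg)
      finally show ?thesis by (simp add: mult_ac)
    qed
    have "E Q s w = (\<Sum>b\<le>k. poly (coeff Q b) s * w ^ b)" by (rule E_expand[OF dQ])
    then have "\<bar>E Q s w\<bar> \<le> (\<Sum>b\<le>k. \<bar>poly (coeff Q b) s\<bar> * \<bar>w\<bar> ^ b)"
      using sum_abs[of "\<lambda>b. poly (coeff Q b) s * w ^ b" "{..k}"] by (simp add: abs_mult power_abs)
    also have "\<dots> \<le> (\<Sum>b\<le>k. M * P * R ^ k)"
    proof (rule sum_mono)
      fix b assume b: "b \<in> {..k}"
      have X: "\<bar>poly (coeff Q b) s\<bar> \<le> Km * Bc k S Q b * (1 + R) ^ (k - b)"
        using LagB(1)[OF Q, of b s] b sR[of "k - b"] Km_nonneg Bc_nonneg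
        by (smt (verit, ccfv_SIG) atMost_iff mult_left_mono mult_nonneg_nonneg)
      have "\<bar>poly (coeff Q b) s\<bar> * \<bar>w\<bar> ^ b \<le> Km * C0 * P * 2 ^ k * R ^ k"
        by (rule term_bound[OF R _ _ X _ wR[of b] B C00 P0]) (use b in auto)
      then show "\<bar>poly (coeff Q b) s\<bar> * \<bar>w\<bar> ^ b \<le> M * P * R ^ k"
        unfolding M_def by (simp add: mult_ac)
    qed
    also have "\<dots> = real (Suc k) * (M * P * R ^ k)" by simp
    finally have v: "\<bar>E Q s w\<bar> \<le> C * R ^ k * P" using MP by linarith
    have dDs: "degree (Ds Q) \<le> k" unfolding Ds_def using map_poly_degree_leq dQ order_trans by blast
    have "E (Ds Q) s w = (\<Sum>b\<le>k. poly (pderiv (coeff Q b)) s * w ^ b)"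
      using E_expand[OF dDs] by (simp add: coeff_Ds)
    then have "R * \<bar>E (Ds Q) s w\<bar> \<le> R * (\<Sum>b\<le>k. \<bar>poly (pderiv (coeff Q b)) s\<bar> * \<bar>w\<bar> ^ b)"
      using sum_abs[of "\<lambda>b. poly (pderiv (coeff Q b)) s * w ^ b" "{..k}"] R
      by (intro mult_left_mono) (auto simp: abs_mult power_abs)
    also have "\<dots> = (\<Sum>b\<le>k. (R * \<bar>poly (pderiv (coeff Q b)) s\<bar>) * \<bar>w\<bar> ^ b)"
      by (simp add: sum_distrib_left mult_ac)
    also have "\<dots> \<le> (\<Sum>b\<le>k. M * P * R ^ k)"
    proof (rule sum_mono)
      fix b assume b: "b \<in> {..k}"
      have X: "R * \<bar>poly (pderiv (coeff Q b)) s\<bar> \<le> Km * Bc k S Q b * (1 + R) ^ (k - b)"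
      proof (cases "k - b = 0")
        case True
        then have "degree (coeff Q b) = 0" using tdeg_coeff_deg[OF Q, of b] by simp
        then have "pderiv (coeff Q b) = 0" by (simp add: pderiv_eq_0_iff)
        then show ?thesis using Km_nonneg Bc_nonneg R by simp
      next
        case False
        have "R * \<bar>poly (pderiv (coeff Q b)) s\<bar> \<le> R * (Km * Bc k S Q b * (1 + \<bar>s\<bar>) ^ (k - b - 1))"
          using LagB(2)[OF Q, of b s] b R by (intro mult_left_mono) auto
        also have "\<dots> \<le> (1 + R) * (Km * Bc k S Q b * (1 + R) ^ (k - b - 1))"
          using sR[of "k - b - 1"] Km_nonneg Bc_nonneg R
          by (intro mult_mono mult_left_mono) (auto simp: mult_nonneg_nonneg)
        also have "\<dots> = Km * Bc k S Q b * (1 + R) ^ (k - b)"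
          using False by (simp add: mult_ac power_Suc[symmetric] Suc_diff_Suc)
        finally show ?thesis .
      qed
      have "(R * \<bar>poly (pderiv (coeff Q b)) s\<bar>) * \<bar>w\<bar> ^ b \<le> Km * C0 * P * 2 ^ k * R ^ k"
        by (rule term_bound[OF R _ _ X _ wR[of b] B C00 P0]) (use b R in auto)
      then show "(R * \<bar>poly (pderiv (coeff Q b)) s\<bar>) * \<bar>w\<bar> ^ b \<le> M * P * R ^ k"
        unfolding M_def by (simp add: mult_ac)
    qed
    also have "\<dots> = real (Suc k) * (M * P * R ^ k)" by simp
    finally have ds: "R * \<bar>E (Ds Q) s w\<bar> \<le> C * R ^ k * P" using MP by linarith
    have "E (pderiv Q) s w = E ((pderiv ^^ 1) Q) s w" by simp
    also have "\<dots> = (\<Sum>n\<le>k. real (Suc n) * poly (coeff Q (n + 1)) s * w ^ n)"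
      using E_higher_pderiv[OF dQ, of 1 s w] by simp
    finally have "R * \<bar>E (pderiv Q) s w\<bar> \<le> R * (\<Sum>n\<le>k. real (Suc n) * \<bar>poly (coeff Q (n + 1)) s\<bar> * \<bar>w\<bar> ^ n)"
      using sum_abs[of "\<lambda>n. real (Suc n) * poly (coeff Q (n + 1)) s * w ^ n" "{..k}"] R
      by (intro mult_left_mono) (auto simp: abs_mult power_abs)
    also have "\<dots> = (\<Sum>n\<le>k. real (Suc n) * (\<bar>poly (coeff Q (n + 1)) s\<bar> * (R * \<bar>w\<bar> ^ n)))"
      by (simp add: sum_distrib_left mult_ac)
    also have "\<dots> \<le> (\<Sum>n\<le>k. real (Suc k) * (M * P * R ^ k))"
    proof (rule sum_mono)
      fix n assume n: "n \<in> {..k}"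
      have T: "\<bar>poly (coeff Q (n + 1)) s\<bar> * (R * \<bar>w\<bar> ^ n) \<le> M * P * R ^ k"
      proof (cases "n + 1 \<le> k")
        case True
        have X: "\<bar>poly (coeff Q (n + 1)) s\<bar> \<le> Km * Bc k S Q (n + 1) * (1 + R) ^ (k - (n + 1))"
          using LagB(1)[OF Q True, of s] sR[of "k - (n + 1)"] Km_nonneg Bc_nonneg
          by (smt (verit, ccfv_SIG) mult_left_mono mult_nonneg_nonneg)
        have Y: "R * \<bar>w\<bar> ^ n \<le> R ^ (n + 1)" using wR[of n] R by (simp add: mult_left_mono)
        have "\<bar>poly (coeff Q (n + 1)) s\<bar> * (R * \<bar>w\<bar> ^ n) \<le> Km * C0 * P * 2 ^ k * R ^ k"
          by (rule term_bound[OF R _ _ X _ Y B C00 P0]) (use True R in auto)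
        then show ?thesis unfolding M_def by (simp add: mult_ac)
      next
        case False
        then show ?thesis using tdeg_coeff_0[OF Q, of "n + 1"] M0 P0 R by simp
      qed
      have "real (Suc n) * (\<bar>poly (coeff Q (n + 1)) s\<bar> * (R * \<bar>w\<bar> ^ n)) \<le> real (Suc k) * (\<bar>poly (coeff Q (n + 1)) s\<bar> * (R * \<bar>w\<bar> ^ n))"
        using n R by (intro mult_right_mono) auto
      also have "\<dots> \<le> real (Suc k) * (M * P * R ^ k)" using T by (intro mult_left_mono) auto
      finally show "real (Suc n) * (\<bar>poly (coeff Q (n + 1)) s\<bar> * (R * \<bar>w\<bar> ^ n)) \<le> real (Suc k) * (M * P * R ^ k)" .
    qed
    also have "\<dots> = real (Suc k) * (real (Suc k) * (M * P * R ^ k))" by simp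
    also have "\<dots> \<le> C * R ^ k * P"
      unfolding C_def using M0 P0 R by (simp add: algebra_simps mult_nonneg_nonneg)
    finally have dw: "R * \<bar>E (pderiv Q) s w\<bar> \<le> C * R ^ k * P" .
    show "\<bar>E Q s w\<bar> \<le> C * R ^ k * Phi k S Q \<delta> \<and> R * \<bar>E (Ds Q) s w\<bar> \<le> C * R ^ k * Phi k S Q \<delta>
     \<and> R * \<bar>E (pderiv Q) s w\<bar> \<le> C * R ^ k * Phi k S Q \<delta>" using v ds dw unfolding P_def by blast
  qed
  then show ?thesis using Cpos by blast
qed
end

lemma core:
  fixes S :: "nat \<Rightarrow> real set" and k :: nat
  assumes fin: "\<And>l. finite (S l)" and card: "\<And>l. card (S l) = Suc l" and bnd: "\<And>l t. t \<in> S l \<Longrightarrow> \<bar>t\<bar> \<le> 1"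
  shows "\<exists>C>0. \<forall>Q \<delta> R s w. tdeg k Q \<longrightarrow> (\<forall>l\<le>k. \<forall>t\<in>S l. \<bar>\<delta> l t\<bar> \<le> 2) \<longrightarrow> 1 \<le> R \<longrightarrow> \<bar>s\<bar> \<le> R \<longrightarrow> \<bar>w\<bar> \<le> R \<longrightarrow>
     \<bar>E Q s w\<bar> \<le> C * R ^ k * Phi k S Q \<delta> \<and> R * \<bar>E (Ds Q) s w\<bar> \<le> C * R ^ k * Phi k S Q \<delta>
     \<and> R * \<bar>E (pderiv Q) s w\<bar> \<le> C * R ^ k * Phi k S Q \<delta>"
proof -
  have "\<forall>l. \<exists>K\<ge>0. \<forall>p. degree p \<le> l \<longrightarrow> (\<forall>s. \<bar>poly p s\<bar> \<le> K * (\<Sum>t\<in>S l. \<bar>poly p t\<bar>) * (1 + \<bar>s\<bar>) ^ l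
      \<and> \<bar>poly (pderiv p) s\<bar> \<le> K * (\<Sum>t\<in>S l. \<bar>poly p t\<bar>) * (1 + \<bar>s\<bar>) ^ (l - 1))"
    using lagrange[OF fin card] by blast
  then obtain K where K: "\<forall>l. K l \<ge> 0 \<and> (\<forall>p. degree p \<le> l \<longrightarrow> (\<forall>s. \<bar>poly p s\<bar> \<le> K l * (\<Sum>t\<in>S l. \<bar>poly p t\<bar>) * (1 + \<bar>s\<bar>) ^ l
      \<and> \<bar>poly (pderiv p) s\<bar> \<le> K l * (\<Sum>t\<in>S l. \<bar>poly p t\<bar>) * (1 + \<bar>s\<bar>) ^ (l - 1)))"
    by (metis choice)
  show ?thesis
    by (rule final_bounds[of S K k]) (use fin card bnd K in auto)
qed

lemma inner2: "(x::real^2) \<bullet> y = x$1 * y$1 + x$2 * y$2"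
  by (simp add: inner_vec_def sum_2)

lemma onb_decomp:
  fixes u \<eta> x :: "real^2"
  assumes "norm u = 1" "norm \<eta> = 1" "\<eta> \<bullet> u = 0"
  shows "x = (x \<bullet> u) *\<^sub>R u + (x \<bullet> \<eta>) *\<^sub>R \<eta>"
proof -
  have uu: "u \<bullet> u = 1" "\<eta> \<bullet> \<eta> = 1" using assms by (simp_all add: dot_square_norm)
  define a b c e where "a = u$1" "b = u$2" "c = \<eta>$1" "e = \<eta>$2"
  have h1: "a*a + b*b = 1" using uu(1) unfolding inner2 a_b_c_e_def .
  have h2: "c*c + e*e = 1" using uu(2) unfolding inner2 a_b_c_e_def .
  have h3: "c*a + e*b = 0" using assms(3) unfolding inner2 a_b_c_e_def .
  have s1: "a*a + c*c = 1" using h1 h2 h3 by algebra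
  have s2: "b*b + e*e = 1" using h1 h2 h3 by algebra
  have "(a*b + c*e)^2 = 0" using h1 h2 h3 by algebra
  then have s3: "a*b + c*e = 0" by simp
  show ?thesis
  proof (subst vec_eq_iff, rule allI)
    fix i :: 2
    have "i = 1 \<or> i = 2" using exhaust_2 by blast
    then show "x $ i = ((x \<bullet> u) *\<^sub>R u + (x \<bullet> \<eta>) *\<^sub>R \<eta>) $ i"
    proof
      assume i: "i = 1"
      have "((x \<bullet> u) *\<^sub>R u + (x \<bullet> \<eta>) *\<^sub>R \<eta>) $ 1 = x$1 * (a*a + c*c) + x$2 * (a*b + c*e)"
        unfolding inner2 a_b_c_e_def by (simp add: algebra_simps)
      then show ?thesis using i s1 s3 by simp
    next
      assume i: "i = 2"
      have "((x \<bullet> u) *\<^sub>R u + (x \<bullet> \<eta>) *\<^sub>R \<eta>) $ 2 = x$1 * (a*b + c*e) + x$2 * (b*b + e*e)"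
        unfolding inner2 a_b_c_e_def by (simp add: algebra_simps)
      then show ?thesis using i s2 s3 by simp
    qed
  qed
qed

lemma E_smult [simp]: "E (smult p Q) s w = poly p s * E Q s w"
  by (simp add: E_def)

lemma poly2_repr:
  fixes mid U W :: "real^2"
  assumes "poly2 k v"
  shows "\<exists>Q. tdeg k Q \<and> (\<forall>s w. v (mid + s *\<^sub>R U + w *\<^sub>R W) = E Q s w)"
proof -
  obtain cf where cf: "\<And>x. v x = (\<Sum>a\<le>k. \<Sum>b\<le>k - a. cf a b * (x$1) ^ a * (x$2) ^ b)"
    using assms unfolding poly2_def by blast
  define A1 where "A1 = [:[:mid$1, U$1:], [:W$1:]:]"
  define A2 where "A2 = [:[:mid$2, U$2:], [:W$2:]:]"
  define Q where "Q = (\<Sum>a\<le>k. \<Sum>b\<le>k - a. [:[:cf a b:]:] * A1 ^ a * A2 ^ b)"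
  have tQ: "tdeg k Q" unfolding Q_def
  proof (intro tdeg_sum)
    fix a b assume a: "a \<in> {..k}" and b: "b \<in> {..k - a}"
    have "tdeg (0 + 1 * a + 1 * b) ([:[:cf a b:]:] * A1 ^ a * A2 ^ b)"
      unfolding A1_def A2_def by (intro tdeg_mult tdeg_power tdeg_const tdeg_affine)
    then show "tdeg k ([:[:cf a b:]:] * A1 ^ a * A2 ^ b)" using a b by (auto intro: tdeg_mono)
  qed auto
  have "v (mid + s *\<^sub>R U + w *\<^sub>R W) = E Q s w" for s w
  proof -
    have "E A1 s w = (mid + s *\<^sub>R U + w *\<^sub>R W)$1" "E A2 s w = (mid + s *\<^sub>R U + w *\<^sub>R W)$2"
      unfolding A1_def A2_def by (simp_all add: algebra_simps)
    then show ?thesis unfolding Q_def cf by (simp add: E_sum mult.assoc)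
  qed
  then show ?thesis using tQ by blast
qed

lemma coord_has_derivative:
  fixes mid u :: "real^2" and r :: real
  shows "((\<lambda>x. (2 / r) * ((x - mid) \<bullet> u)) has_derivative (\<lambda>e. (2 / r) * (e \<bullet> u))) (at x)"
proof -
  have "((\<lambda>x. x - mid) has_derivative (\<lambda>e. e - 0)) (at x)"
    by (intro has_derivative_diff has_derivative_ident has_derivative_const)
  from has_derivative_inner_left[OF this, of u]
  have "((\<lambda>x. (x - mid) \<bullet> u) has_derivative (\<lambda>e. (e - 0) \<bullet> u)) (at x)" .
  from has_derivative_mult_right[OF this, of "2 / r"] show ?thesis by simp
qed

definition crd :: "real^2 \<Rightarrow> real^2 \<Rightarrow> real \<Rightarrow> real^2 \<Rightarrow> real" where
  "crd mid u r x = (2 / r) * ((x - mid) \<bullet> u)"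

lemma E_crd_has_derivative:
  "((\<lambda>x. E Q (crd mid u r x) (crd mid \<eta> r x)) has_derivative
     (\<lambda>e. E (Ds Q) (crd mid u r x) (crd mid \<eta> r x) * ((2 / r) * (e \<bullet> u))
        + E (pderiv Q) (crd mid u r x) (crd mid \<eta> r x) * ((2 / r) * (e \<bullet> \<eta>)))) (at x)"
  unfolding crd_def by (intro E_has_derivative coord_has_derivative)

lemma frechet_E_crd:
  "frechet_derivative (\<lambda>x. E Q (crd mid u r x) (crd mid \<eta> r x)) (at x) e =
     E (Ds Q) (crd mid u r x) (crd mid \<eta> r x) * ((2 / r) * (e \<bullet> u))
        + E (pderiv Q) (crd mid u r x) (crd mid \<eta> r x) * ((2 / r) * (e \<bullet> \<eta>))"
proof -
  note fd = frechet_derivative_at[OF E_crd_has_derivative]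
  show ?thesis unfolding fd[symmetric] by simp
qed

lemma dirderiv_E:
  assumes "\<eta> \<bullet> u = 0" "\<eta> \<bullet> \<eta> = 1"
  shows "dirderiv \<eta> (\<lambda>x. c * E P (crd mid u r x) (crd mid \<eta> r x))
       = (\<lambda>x. (c * (2 / r)) * E (pderiv P) (crd mid u r x) (crd mid \<eta> r x))"
proof
  fix x
  have "((\<lambda>x. c * E P (crd mid u r x) (crd mid \<eta> r x)) has_derivative
     (\<lambda>e. c * (E (Ds P) (crd mid u r x) (crd mid \<eta> r x) * ((2 / r) * (e \<bullet> u))
        + E (pderiv P) (crd mid u r x) (crd mid \<eta> r x) * ((2 / r) * (e \<bullet> \<eta>))))) (at x)"
    by (intro has_derivative_mult_right E_crd_has_derivative)
  note fd = frechet_derivative_at[OF this]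
  show "dirderiv \<eta> (\<lambda>x. c * E P (crd mid u r x) (crd mid \<eta> r x)) x
       = (c * (2 / r)) * E (pderiv P) (crd mid u r x) (crd mid \<eta> r x)"
    unfolding dirderiv_def fd[symmetric] using assms by (simp add: inner_commute[of u \<eta>])
qed

lemma dirderiv_pow_E:
  assumes "\<eta> \<bullet> u = 0" "\<eta> \<bullet> \<eta> = 1"
  shows "dirderiv_pow j \<eta> (\<lambda>x. E Q (crd mid u r x) (crd mid \<eta> r x))
       = (\<lambda>x. (2 / r) ^ j * E ((pderiv ^^ j) Q) (crd mid u r x) (crd mid \<eta> r x))"
proof (induction j)
  case 0
  then show ?case by (simp add: dirderiv_pow_def)
next
  case (Suc j)
  have "dirderiv_pow (Suc j) \<eta> (\<lambda>x. E Q (crd mid u r x) (crd mid \<eta> r x))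
      = dirderiv \<eta> (dirderiv_pow j \<eta> (\<lambda>x. E Q (crd mid u r x) (crd mid \<eta> r x)))"
    by (simp add: dirderiv_pow_def)
  also have "\<dots> = (\<lambda>x. ((2 / r) ^ j * (2 / r)) * E (pderiv ((pderiv ^^ j) Q)) (crd mid u r x) (crd mid \<eta> r x))"
    unfolding Suc by (rule dirderiv_E[OF assms])
  finally show ?case by (simp add: mult.commute)
qed

lemma grad_E:
  fixes u \<eta> :: "real^2"
  shows "grad (\<lambda>x. E Q (crd mid u r x) (crd mid \<eta> r x)) x
     = (2 / r) *\<^sub>R (E (Ds Q) (crd mid u r x) (crd mid \<eta> r x) *\<^sub>R u + E (pderiv Q) (crd mid u r x) (crd mid \<eta> r x) *\<^sub>R \<eta>)"
  unfolding grad_def frechet_E_crd by (simp add: vec_eq_iff inner_axis' algebra_simps)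

lemma param_close:
  fixes \<gamma> :: "real \<Rightarrow> real^2" and lam :: real
  assumes cont: "continuous_on UNIV \<gamma>" and per: "\<And>t. \<gamma> (t + 1) = \<gamma> t" and inj: "inj_on \<gamma> {0..<1}"
    and lam: "lam > 0"
  shows "\<exists>\<rho>>0. \<forall>s\<in>{0..1}. \<forall>s'\<in>{0..1}. dist (\<gamma> s) (\<gamma> s') < \<rho> \<longrightarrow>
     (\<bar>s - s'\<bar> < lam \<or> \<bar>s - s' - 1\<bar> < lam \<or> \<bar>s - s' + 1\<bar> < lam)"
proof -
  define K where "K = ({0..1} \<times> {0..1}) \<inter> {x::real\<times>real. lam \<le> \<bar>fst x - snd x\<bar>}
     \<inter> {x. lam \<le> \<bar>fst x - snd x - 1\<bar>} \<inter> {x. lam \<le> \<bar>fst x - snd x + 1\<bar>}"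
  have cK: "compact K" unfolding K_def
    by (intro compact_Int_closed compact_Times compact_Icc closed_Collect_le continuous_intros)
  define f where "f x = dist (\<gamma> (fst x)) (\<gamma> (snd x))" for x :: "real \<times> real"
  have cf: "continuous_on K f" unfolding f_def
    by (intro continuous_intros continuous_on_compose2[OF cont]) auto
  have pos: "f x > 0" if "x \<in> K" for x
  proof (rule ccontr)
    assume "\<not> f x > 0"
    then have eq: "\<gamma> (fst x) = \<gamma> (snd x)" unfolding f_def by simp
    obtain a b where x: "x = (a, b)" by fastforce
    have ab: "a \<in> {0..1}" "b \<in> {0..1}" "lam \<le> \<bar>a - b\<bar>" "lam \<le> \<bar>a - b - 1\<bar>" "lam \<le> \<bar>a - b + 1\<bar>"
      using that unfolding K_def x by auto
    have g10: "\<gamma> 1 = \<gamma> 0" using per[of 0] by simp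
    have eq': "\<gamma> a = \<gamma> b" using eq x by simp
    show False
    proof (cases "a < 1")
      case a: True
      show False
      proof (cases "b < 1")
        case True
        then have "a = b" using inj eq' a ab by (auto dest: inj_onD)
        then show False using ab lam by simp
      next
        case False
        then have "b = 1" using ab by auto
        then have "\<gamma> a = \<gamma> 0" using eq' g10 by simp
        then have "a = 0" using inj a ab by (auto dest: inj_onD)
        then show False using ab lam \<open>b = 1\<close> by simp
      qed
    next
      case False
      then have a1: "a = 1" using ab by auto
      show False
      proof (cases "b < 1")
        case True
        have "\<gamma> b = \<gamma> 0" using eq' g10 a1 by simp
        then have "b = 0" using inj True ab by (auto dest: inj_onD)
        then show False using ab lam a1 by simp
      next
        case False
        then show False using ab lam a1 by simp
      qed
    qed
  qed
  show ?thesis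
  proof (cases "K = {}")
    case True
    show ?thesis
    proof (intro exI[of _ 1] conjI ballI impI)
      fix s s' assume "s \<in> {0..1::real}" "s' \<in> {0..1::real}" "dist (\<gamma> s) (\<gamma> s') < 1"
      then have "(s, s') \<notin> K" using True by auto
      then show "\<bar>s - s'\<bar> < lam \<or> \<bar>s - s' - 1\<bar> < lam \<or> \<bar>s - s' + 1\<bar> < lam"
        using \<open>s \<in> _\<close> \<open>s' \<in> _\<close> unfolding K_def by auto
    qed simp
  next
    case False
    obtain x0 where x0: "x0 \<in> K" "\<And>y. y \<in> K \<Longrightarrow> f x0 \<le> f y"
      using continuous_attains_inf[OF cK False cf] by blast
    show ?thesis
    proof (intro exI[of _ "f x0"] conjI ballI impI)
      show "f x0 > 0" by (rule pos[OF x0(1)])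
      fix s s' assume s: "s \<in> {0..1::real}" "s' \<in> {0..1::real}" and d: "dist (\<gamma> s) (\<gamma> s') < f x0"
      show "\<bar>s - s'\<bar> < lam \<or> \<bar>s - s' - 1\<bar> < lam \<or> \<bar>s - s' + 1\<bar> < lam"
      proof (rule ccontr)
        assume "\<not> ?thesis"
        then have "(s, s') \<in> K" using s unfolding K_def by auto
        then have "f x0 \<le> f (s, s')" by (rule x0(2))
        then show False using d unfolding f_def by simp
      qed
    qed
  qed
qed

lemma smooth_basic:
  assumes "smooth_closed_curve \<gamma>"
  shows "\<And>t. (\<gamma> has_vector_derivative vderiv \<gamma> t) (at t)"
    and "\<And>t. (vderiv \<gamma> has_vector_derivative vderiv (vderiv \<gamma>) t) (at t)"
    and "continuous_on UNIV \<gamma>" and "continuous_on UNIV (vderiv \<gamma>)" and "continuous_on UNIV (vderiv (vderiv \<gamma>))"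
    and "\<And>t. \<gamma> (t + 1) = \<gamma> t" and "inj_on \<gamma> {0..<1}" and "\<And>t. vderiv \<gamma> t \<noteq> 0"
proof -
  have D: "\<And>n t. ((vderiv ^^ n) \<gamma>) differentiable (at t)" using assms unfolding smooth_closed_curve_def by blast
  have D0: "\<And>t. \<gamma> differentiable (at t)" using D[of 0] by simp
  have D1: "\<And>t. vderiv \<gamma> differentiable (at t)" using D[of 1] by simp
  have D2: "\<And>t. vderiv (vderiv \<gamma>) differentiable (at t)" using D[of 2] by (simp add: numeral_2_eq_2)
  show "\<And>t. (\<gamma> has_vector_derivative vderiv \<gamma> t) (at t)"
    using D0 unfolding vderiv_def by (simp add: vector_derivative_works[symmetric])
  show "\<And>t. (vderiv \<gamma> has_vector_derivative vderiv (vderiv \<gamma>) t) (at t)"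
    using D1 unfolding vderiv_def[of "vderiv \<gamma>"] by (simp add: vector_derivative_works[symmetric])
  show "continuous_on UNIV \<gamma>" using D0
    by (simp add: continuous_at_imp_continuous_on differentiable_imp_continuous_within)
  show "continuous_on UNIV (vderiv \<gamma>)" using D1
    by (simp add: continuous_at_imp_continuous_on differentiable_imp_continuous_within)
  show "continuous_on UNIV (vderiv (vderiv \<gamma>))" using D2
    by (simp add: continuous_at_imp_continuous_on differentiable_imp_continuous_within)
  show "\<And>t. \<gamma> (t + 1) = \<gamma> t" "inj_on \<gamma> {0..<1}" "\<And>t. vderiv \<gamma> t \<noteq> 0"
    using assms unfolding smooth_closed_curve_def by blast+
qed

lemma deriv_inner:
  assumes "(\<gamma> has_vector_derivative v) (at s)"
  shows "((\<lambda>s. (\<gamma> s - y) \<bullet> c) has_real_derivative (v \<bullet> c)) (at s)"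
proof -
  have "((\<lambda>s. \<gamma> s - y) has_derivative (\<lambda>h. h *\<^sub>R v - 0)) (at s)"
    using assms unfolding has_vector_derivative_def by (intro has_derivative_diff has_derivative_const)
  from has_derivative_inner_left[OF this, of c]
  have "((\<lambda>s. (\<gamma> s - y) \<bullet> c) has_derivative (\<lambda>h. (h *\<^sub>R v - 0) \<bullet> c)) (at s)" .
  then show ?thesis unfolding has_field_derivative_def
    by (rule has_derivative_eq_rhs) (simp add: fun_eq_iff)
qed

lemma eps_facts:
  fixes m M1 L :: real
  assumes "0 < m" "m \<le> M1" "0 \<le> L"
  defines "lam \<equiv> min 1 (m^2 / (8 * (M1 + 1) * (L + 1)))"
  shows "L * lam \<le> m / 8" "M1 * (L * lam) \<le> m^2 / 8" "0 < lam" "lam \<le> 1"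
proof -
  define q where "q = m^2 / (8 * (M1 + 1))"
  have q0: "q \<ge> 0" unfolding q_def using assms by simp
  have lamq: "lam \<le> q / (L + 1)" unfolding lam_def q_def using assms by (simp add: field_simps)
  have "L * lam \<le> L * (q / (L + 1))" using lamq assms by (intro mult_left_mono) auto
  also have "\<dots> \<le> q" using q0 assms by (simp add: field_simps)
  finally have Lq: "L * lam \<le> q" .
  have mm: "m * m \<le> m * (M1 + 1)" using assms by (intro mult_left_mono) auto
  have "q = (m * m) / (8 * (M1 + 1))" unfolding q_def by (simp add: power2_eq_square)
  also have "\<dots> \<le> (m * (M1 + 1)) / (8 * (M1 + 1))" using mm assms by (intro divide_right_mono) auto
  also have "\<dots> = m / 8" using assms by (simp add: field_simps)
  finally have "q \<le> m / 8" .
  then show "L * lam \<le> m / 8" using Lq by linarith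
  have "M1 * (L * lam) \<le> M1 * q" using Lq assms by (intro mult_left_mono) auto
  also have "\<dots> \<le> m^2 / 8" unfolding q_def using assms by (simp add: field_simps power2_eq_square mult_left_mono)
  finally show "M1 * (L * lam) \<le> m^2 / 8" .
  show "0 < lam" unfolding lam_def using assms by simp
  show "lam \<le> 1" unfolding lam_def by simp
qed

lemma key_pos:
  fixes v0 e Er :: "real^2" and d m M1 \<epsilon> :: real
  assumes "m \<le> norm v0" "norm v0 \<le> M1" "norm e \<le> \<epsilon>" "norm Er \<le> \<bar>d\<bar> * \<epsilon>" "\<epsilon> \<le> m / 8" "M1 * \<epsilon> \<le> m^2 / 8"
    "0 < m" "0 \<le> \<epsilon>"
  shows "d * ((v0 + e) \<bullet> (d *\<^sub>R v0 + Er)) \<ge> d^2 * m^2 / 2"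
proof -
  define A where "A = v0 \<bullet> v0"
  define B where "B = v0 \<bullet> Er"
  define Cc where "Cc = e \<bullet> v0"
  define D where "D = e \<bullet> Er"
  have expand: "(v0 + e) \<bullet> (d *\<^sub>R v0 + Er) = d * A + B + d * Cc + D"
    unfolding A_def B_def Cc_def D_def by (simp add: inner_add_left inner_add_right algebra_simps)
  have A: "A \<ge> m^2" unfolding A_def using assms power_mono[of m "norm v0" 2]
    by (simp add: power2_norm_eq_inner[symmetric])
  have B: "\<bar>B\<bar> \<le> M1 * (\<bar>d\<bar> * \<epsilon>)" unfolding B_def
    using Cauchy_Schwarz_ineq2[of v0 Er] assms mult_mono[of "norm v0" M1 "norm Er" "\<bar>d\<bar> * \<epsilon>"]
    by (smt (verit) norm_ge_zero)
  have Cc: "\<bar>Cc\<bar> \<le> \<epsilon> * M1" unfolding Cc_def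
    using Cauchy_Schwarz_ineq2[of e v0] assms mult_mono[of "norm e" \<epsilon> "norm v0" M1]
    by (smt (verit) norm_ge_zero)
  have D: "\<bar>D\<bar> \<le> \<epsilon> * (\<bar>d\<bar> * \<epsilon>)" unfolding D_def
    using Cauchy_Schwarz_ineq2[of e Er] assms mult_mono[of "norm e" \<epsilon> "norm Er" "\<bar>d\<bar> * \<epsilon>"]
    by (smt (verit) norm_ge_zero)
  have dd: "d * d = d^2" "\<bar>d\<bar> * \<bar>d\<bar> = d^2" by (auto simp: power2_eq_square abs_mult_self_eq)
  have t1: "d * (d * A) \<ge> d^2 * m^2" using A by (simp add: mult.assoc[symmetric] dd mult_left_mono)
  have t2: "d * B \<ge> - (d^2 * (M1 * \<epsilon>))"
  proof -
    have "\<bar>d * B\<bar> \<le> \<bar>d\<bar> * (M1 * (\<bar>d\<bar> * \<epsilon>))" unfolding abs_mult using B by (intro mult_left_mono) auto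
    also have "\<dots> = d^2 * (M1 * \<epsilon>)" using dd by (simp add: algebra_simps)
    finally show ?thesis by linarith
  qed
  have t3: "d * (d * Cc) \<ge> - (d^2 * (M1 * \<epsilon>))"
  proof -
    have "\<bar>d * (d * Cc)\<bar> \<le> d^2 * (\<epsilon> * M1)" unfolding abs_mult using Cc dd
      by (metis abs_ge_zero mult.assoc mult_left_mono)
    then show ?thesis by (simp add: mult_ac)
  qed
  have t4: "d * D \<ge> - (d^2 * \<epsilon>^2)"
  proof -
    have "\<bar>d * D\<bar> \<le> \<bar>d\<bar> * (\<epsilon> * (\<bar>d\<bar> * \<epsilon>))" unfolding abs_mult using D by (intro mult_left_mono) auto
    also have "\<dots> = d^2 * \<epsilon>^2" using dd by (simp add: algebra_simps power2_eq_square)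
    finally show ?thesis by linarith
  qed
  have e2: "\<epsilon>^2 \<le> m^2 / 64" using assms power_mono[of \<epsilon> "m/8" 2] by (simp add: power_divide)
  have "m^2 / 2 \<le> m^2 - 2 * (M1 * \<epsilon>) - \<epsilon>^2" using assms e2 zero_le_power2[of m] by linarith
  then have "d^2 * (m^2 / 2) \<le> d^2 * (m^2 - 2 * (M1 * \<epsilon>) - \<epsilon>^2)" by (intro mult_left_mono) auto
  then have "d^2 * m^2 / 2 \<le> d^2 * m^2 - d^2 * (M1 * \<epsilon>) - d^2 * (M1 * \<epsilon>) - d^2 * \<epsilon>^2"
    by (simp add: algebra_simps)
  also have "\<dots> \<le> d * ((v0 + e) \<bullet> (d *\<^sub>R v0 + Er))"
    unfolding expand using t1 t2 t3 t4 by (simp add: algebra_simps)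
  finally show ?thesis .
qed


lemma curve_flat:
  assumes sm: "smooth_closed_curve \<gamma>"
  shows "\<exists>h0>0. \<forall>y z p \<eta>. y \<in> \<gamma> ` {0..1} \<longrightarrow> z \<in> \<gamma> ` {0..1} \<longrightarrow> p \<in> \<gamma> ` {0..1} \<longrightarrow>
     dist y z \<le> h0 \<longrightarrow> dist y p \<le> h0 \<longrightarrow> y \<noteq> z \<longrightarrow> 0 \<le> (p - y) \<bullet> (z - y) \<longrightarrow>
     (p - y) \<bullet> (z - y) \<le> (z - y) \<bullet> (z - y) \<longrightarrow> \<eta> \<bullet> (z - y) = 0 \<longrightarrow> norm \<eta> = 1 \<longrightarrow>
     \<bar>(p - y) \<bullet> \<eta>\<bar> \<le> dist y z"
proof -
  define g1 where "g1 = vderiv \<gamma>"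
  define g2 where "g2 = vderiv g1"
  have dg1: "\<And>t. (\<gamma> has_vector_derivative g1 t) (at t)" using smooth_basic(1)[OF sm] g1_def by simp
  have dg2: "\<And>t. (g1 has_vector_derivative g2 t) (at t)" using smooth_basic(2)[OF sm] g1_def g2_def by simp
  have cg: "continuous_on UNIV \<gamma>" using smooth_basic(3)[OF sm] .
  have cg1: "continuous_on UNIV g1" using smooth_basic(4)[OF sm] g1_def by simp
  have cg2: "continuous_on UNIV g2" using smooth_basic(5)[OF sm] g1_def g2_def by simp
  have per: "\<And>t. \<gamma> (t + 1) = \<gamma> t" using smooth_basic(6)[OF sm] .
  have inj: "inj_on \<gamma> {0..<1}" using smooth_basic(7)[OF sm] .
  have nz: "\<And>t. g1 t \<noteq> 0" using smooth_basic(8)[OF sm] g1_def by simp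
  define I where "I = {-2..3::real}"
  have cI: "compact I" "I \<noteq> {}" "convex I" unfolding I_def by auto
  have "bounded (g1 ` I)"
    by (intro compact_imp_bounded compact_continuous_image continuous_on_subset[OF cg1] cI) auto
  then obtain M1 where M1: "M1 > 0" "\<And>t. t \<in> I \<Longrightarrow> norm (g1 t) \<le> M1" by (auto simp: bounded_pos)
  have "bounded (g2 ` I)"
    by (intro compact_imp_bounded compact_continuous_image continuous_on_subset[OF cg2] cI) auto
  then obtain M2 where M2: "M2 > 0" "\<And>t. t \<in> I \<Longrightarrow> norm (g2 t) \<le> M2" by (auto simp: bounded_pos)
  have "continuous_on I (\<lambda>t. norm (g1 t))"
    by (intro continuous_on_norm continuous_on_subset[OF cg1]) auto
  then obtain t0 where t0: "t0 \<in> I" "\<And>t. t \<in> I \<Longrightarrow> norm (g1 t0) \<le> norm (g1 t)"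
    using continuous_attains_inf[OF cI(1) cI(2)] by blast
  define m where "m = norm (g1 t0)"
  have m0: "m > 0" unfolding m_def using nz by simp
  have mM: "m \<le> M1" unfolding m_def using M1 t0 by auto
  define L where "L = 3 * M2"
  have L0: "L \<ge> 0" unfolding L_def using M2 by simp
  have Lip: "norm (g1 b - g1 a) \<le> L * \<bar>b - a\<bar>" if ab: "a \<in> I" "b \<in> I" for a b
  proof -
    have "norm (g1 b - g1 a - (b - a) *\<^sub>R g2 a) \<le> norm (b - a) * (2 * M2)"
    proof (rule vector_differentiable_bound_linearization[of I g1 g2 a b a "2 * M2"])
      show "\<And>x. x \<in> I \<Longrightarrow> (g1 has_vector_derivative g2 x) (at x within I)"
        using dg2 has_vector_derivative_at_within by blast
      show "closed_segment a b \<subseteq> I" using cI ab by (simp add: closed_segment_subset)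
      show "\<And>x. x \<in> I \<Longrightarrow> norm (g2 x - g2 a) \<le> 2 * M2"
        using M2 ab by (smt (verit) norm_triangle_ineq4)
      show "a \<in> I" by fact
    qed
    moreover have "norm ((b - a) *\<^sub>R g2 a) \<le> \<bar>b - a\<bar> * M2"
      using M2 ab by (simp add: mult_left_mono)
    moreover have "norm (g1 b - g1 a) \<le> norm (g1 b - g1 a - (b - a) *\<^sub>R g2 a) + norm ((b - a) *\<^sub>R g2 a)"
      using norm_triangle_ineq[of "g1 b - g1 a - (b - a) *\<^sub>R g2 a" "(b - a) *\<^sub>R g2 a"] by simp
    ultimately show ?thesis unfolding L_def by (simp add: algebra_simps)
  qed
  define lam where "lam = min 1 (m^2 / (8 * (M1 + 1) * (L + 1)))"
  have ef: "L * lam \<le> m / 8" "M1 * (L * lam) \<le> m^2 / 8" "0 < lam" "lam \<le> 1"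
    using eps_facts[OF m0 mM L0] unfolding lam_def by auto
  define \<epsilon> where "\<epsilon> = L * lam"
  have e0: "\<epsilon> \<ge> 0" unfolding \<epsilon>_def using L0 ef by simp
  obtain \<rho> where \<rho>: "\<rho> > 0" and \<rho>P: "\<And>s s'. s \<in> {0..1} \<Longrightarrow> s' \<in> {0..1} \<Longrightarrow> dist (\<gamma> s) (\<gamma> s') < \<rho> \<Longrightarrow>
     (\<bar>s - s'\<bar> < lam \<or> \<bar>s - s' - 1\<bar> < lam \<or> \<bar>s - s' + 1\<bar> < lam)"
    using param_close[OF cg per inj ef(3)] by blast
  define h0 where "h0 = min (\<rho> / 2) (m^2 / (4 * L + 1))"
  have h00: "h0 > 0" unfolding h0_def using \<rho> m0 L0 by simp
  have "\<forall>y z p \<eta>. y \<in> \<gamma> ` {0..1} \<longrightarrow> z \<in> \<gamma> ` {0..1} \<longrightarrow> p \<in> \<gamma> ` {0..1} \<longrightarrow>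
     dist y z \<le> h0 \<longrightarrow> dist y p \<le> h0 \<longrightarrow> y \<noteq> z \<longrightarrow> 0 \<le> (p - y) \<bullet> (z - y) \<longrightarrow>
     (p - y) \<bullet> (z - y) \<le> (z - y) \<bullet> (z - y) \<longrightarrow> \<eta> \<bullet> (z - y) = 0 \<longrightarrow> norm \<eta> = 1 \<longrightarrow>
     \<bar>(p - y) \<bullet> \<eta>\<bar> \<le> dist y z"
  proof (intro allI impI)
    fix y z p \<eta> :: "real^2"
    assume y: "y \<in> \<gamma> ` {0..1}" and z: "z \<in> \<gamma> ` {0..1}" and p: "p \<in> \<gamma> ` {0..1}"
      and dyz: "dist y z \<le> h0" and dyp: "dist y p \<le> h0" and yz: "y \<noteq> z"
      and pr1: "0 \<le> (p - y) \<bullet> (z - y)" and pr2: "(p - y) \<bullet> (z - y) \<le> (z - y) \<bullet> (z - y)"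
      and \<eta>z: "\<eta> \<bullet> (z - y) = 0" and \<eta>1: "norm \<eta> = 1"
    obtain \<alpha> where \<alpha>: "\<alpha> \<in> {0..1}" "y = \<gamma> \<alpha>" using y by auto
    have shift: "\<exists>u. \<gamma> u = \<gamma> s \<and> \<bar>u - \<alpha>\<bar> < lam" if s: "s \<in> {0..1}" "dist (\<gamma> s) y < \<rho>" for s
    proof -
      have "\<bar>s - \<alpha>\<bar> < lam \<or> \<bar>s - \<alpha> - 1\<bar> < lam \<or> \<bar>s - \<alpha> + 1\<bar> < lam"
        using \<rho>P[OF s(1) \<alpha>(1)] s(2) \<alpha>(2) by simp
      moreover have "\<gamma> (s - 1) = \<gamma> s" using per[of "s - 1"] by simp
      moreover have "\<gamma> (s + 1) = \<gamma> s" using per[of s] by simp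
      ultimately consider "\<bar>s - \<alpha>\<bar> < lam" | "\<bar>(s - 1) - \<alpha>\<bar> < lam \<and> \<gamma> (s - 1) = \<gamma> s"
        | "\<bar>(s + 1) - \<alpha>\<bar> < lam \<and> \<gamma> (s + 1) = \<gamma> s"
        by (auto simp: algebra_simps)
      then show ?thesis by cases blast+
    qed
    obtain \<beta>0 where \<beta>0: "\<beta>0 \<in> {0..1}" "z = \<gamma> \<beta>0" using z by auto
    obtain \<theta>0 where \<theta>0: "\<theta>0 \<in> {0..1}" "p = \<gamma> \<theta>0" using p by auto
    have "dist z y < \<rho>" using dyz \<rho> unfolding h0_def by (simp add: dist_commute)
    then obtain \<beta> where \<beta>: "\<gamma> \<beta> = z" "\<bar>\<beta> - \<alpha>\<bar> < lam" using shift[OF \<beta>0(1)] \<beta>0(2) by metis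
    have "dist p y < \<rho>" using dyp \<rho> unfolding h0_def by (simp add: dist_commute)
    then obtain \<theta> where \<theta>: "\<gamma> \<theta> = p" "\<bar>\<theta> - \<alpha>\<bar> < lam" using shift[OF \<theta>0(1)] \<theta>0(2) by metis
    have inJ: "s \<in> I" if "\<bar>s - \<alpha>\<bar> \<le> lam" for s using that \<alpha>(1) ef(4) unfolding I_def by (auto simp: abs_le_iff)
    define v0 where "v0 = g1 \<alpha>"
    have \<alpha>I: "\<alpha> \<in> I" using inJ[of \<alpha>] ef by simp
    have nv0: "m \<le> norm v0" "norm v0 \<le> M1" unfolding v0_def using t0 M1 \<alpha>I m_def by auto
    have eb: "norm (g1 s - v0) \<le> \<epsilon>" if "\<bar>s - \<alpha>\<bar> \<le> lam" for s
    proof -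
      have "norm (g1 s - v0) \<le> L * \<bar>s - \<alpha>\<bar>" unfolding v0_def using Lip[OF \<alpha>I inJ[OF that]] .
      also have "\<dots> \<le> L * lam" using that L0 by (intro mult_left_mono) auto
      finally show ?thesis unfolding \<epsilon>_def .
    qed
    define d where "d = \<beta> - \<alpha>"
    have d0: "d \<noteq> 0" using yz \<alpha>(2) \<beta>(1) unfolding d_def by auto
    define J where "J = {\<alpha> - lam..\<alpha> + lam}"
    have Jiff: "s \<in> J \<longleftrightarrow> \<bar>s - \<alpha>\<bar> \<le> lam" for s unfolding J_def by (auto simp: abs_le_iff)
    have Er: "norm (z - y - d *\<^sub>R v0) \<le> \<bar>d\<bar> * \<epsilon>"
    proof -
      have "norm (\<gamma> \<beta> - \<gamma> \<alpha> - (\<beta> - \<alpha>) *\<^sub>R g1 \<alpha>) \<le> norm (\<beta> - \<alpha>) * \<epsilon>"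
      proof (rule vector_differentiable_bound_linearization[of J \<gamma> g1 \<alpha> \<beta> \<alpha> \<epsilon>])
        show "\<And>x. x \<in> J \<Longrightarrow> (\<gamma> has_vector_derivative g1 x) (at x within J)"
          using dg1 has_vector_derivative_at_within by blast
        show "closed_segment \<alpha> \<beta> \<subseteq> J" using \<beta>(2) ef unfolding J_def
          by (intro closed_segment_subset) (auto simp: abs_le_iff)
        show "\<And>x. x \<in> J \<Longrightarrow> norm (g1 x - g1 \<alpha>) \<le> \<epsilon>" using eb Jiff unfolding v0_def by blast
        show "\<alpha> \<in> J" using Jiff ef by simp
      qed
      then show ?thesis using \<alpha>(2) \<beta>(1) unfolding d_def v0_def by (simp add: mult.commute)
    qed
    have kp: "d * (g1 s \<bullet> (z - y)) \<ge> d^2 * m^2 / 2" if "\<bar>s - \<alpha>\<bar> \<le> lam" for s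
    proof -
      have "d * ((v0 + (g1 s - v0)) \<bullet> (d *\<^sub>R v0 + (z - y - d *\<^sub>R v0))) \<ge> d^2 * m^2 / 2"
        by (rule key_pos[OF nv0 eb[OF that] Er]) (use ef m0 e0 in \<open>auto simp: \<epsilon>_def\<close>)
      then show ?thesis by simp
    qed
    have dm: "d^2 * m^2 / 2 > 0" using d0 m0 by simp
    have hp: "g1 s \<bullet> (z - y) > 0" if "\<bar>s - \<alpha>\<bar> \<le> lam" "d > 0" for s
    proof -
      have "0 < d * (g1 s \<bullet> (z - y))" using kp[OF that(1)] dm by linarith
      then show ?thesis using that(2) by (simp add: zero_less_mult_iff)
    qed
    have hn: "g1 s \<bullet> (z - y) < 0" if "\<bar>s - \<alpha>\<bar> \<le> lam" "d < 0" for s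
    proof -
      have "0 < d * (g1 s \<bullet> (z - y))" using kp[OF that(1)] dm by linarith
      then show ?thesis using that(2) by (simp add: zero_less_mult_iff)
    qed
    define h where "h s = (\<gamma> s - y) \<bullet> (z - y)" for s
    have Dh: "DERIV h s :> g1 s \<bullet> (z - y)" for s unfolding h_def by (rule deriv_inner[OF dg1])
    have mvtJ: "\<exists>\<xi>. \<bar>\<xi> - \<alpha>\<bar> \<le> lam \<and> min a b \<le> \<xi> \<and> \<xi> \<le> max a b \<and> f b - f a = (b - a) * f' \<xi>"
      if ab: "a < b" "\<bar>a - \<alpha>\<bar> \<le> lam" "\<bar>b - \<alpha>\<bar> \<le> lam" "\<And>s. DERIV f s :> f' s" for a b and f f' :: "real \<Rightarrow> real"
    proof -
      obtain \<xi> where "a < \<xi>" "\<xi> < b" "f b - f a = (b - a) * f' \<xi>" using MVT2[OF ab(1)] ab(4) by blast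
      then show ?thesis using ab by (intro exI[of _ \<xi>]) (auto simp: abs_le_iff)
    qed
    have h\<alpha>: "h \<alpha> = 0" unfolding h_def using \<alpha>(2) by simp
    have h\<beta>: "h \<beta> = (z - y) \<bullet> (z - y)" unfolding h_def using \<beta>(1) by simp
    have h\<theta>: "h \<theta> = (p - y) \<bullet> (z - y)" unfolding h_def using \<theta>(1) by simp
    have \<theta>l: "\<bar>\<theta> - \<alpha>\<bar> \<le> lam" and \<beta>l: "\<bar>\<beta> - \<alpha>\<bar> \<le> lam" using \<theta>(2) \<beta>(2) by auto
    have \<alpha>l: "\<bar>\<alpha> - \<alpha>\<bar> \<le> lam" using ef by simp
    have betw: "min \<alpha> \<beta> \<le> \<theta> \<and> \<theta> \<le> max \<alpha> \<beta>"
    proof (cases "d > 0")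
      case True
      have "\<not> \<theta> < \<alpha>"
      proof
        assume "\<theta> < \<alpha>"
        then obtain \<xi> where "\<bar>\<xi> - \<alpha>\<bar> \<le> lam" "h \<alpha> - h \<theta> = (\<alpha> - \<theta>) * (g1 \<xi> \<bullet> (z - y))"
          using mvtJ[OF _ \<theta>l \<alpha>l Dh] by blast
        moreover have "(\<alpha> - \<theta>) * (g1 \<xi> \<bullet> (z - y)) > 0" using hp[OF calculation(1) True] \<open>\<theta> < \<alpha>\<close> by simp
        ultimately show False using h\<alpha> h\<theta> pr1 by linarith
      qed
      moreover have "\<not> \<beta> < \<theta>"
      proof
        assume "\<beta> < \<theta>"
        then obtain \<xi> where "\<bar>\<xi> - \<alpha>\<bar> \<le> lam" "h \<theta> - h \<beta> = (\<theta> - \<beta>) * (g1 \<xi> \<bullet> (z - y))"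
          using mvtJ[OF _ \<beta>l \<theta>l Dh] by blast
        moreover have "(\<theta> - \<beta>) * (g1 \<xi> \<bullet> (z - y)) > 0" using hp[OF calculation(1) True] \<open>\<beta> < \<theta>\<close> by simp
        ultimately show False using h\<beta> h\<theta> pr2 by linarith
      qed
      ultimately show ?thesis by linarith
    next
      case False
      then have dn: "d < 0" using d0 by linarith
      have "\<not> \<alpha> < \<theta>"
      proof
        assume "\<alpha> < \<theta>"
        then obtain \<xi> where "\<bar>\<xi> - \<alpha>\<bar> \<le> lam" "h \<theta> - h \<alpha> = (\<theta> - \<alpha>) * (g1 \<xi> \<bullet> (z - y))"
          using mvtJ[OF _ \<alpha>l \<theta>l Dh] by blast
        moreover have "(\<theta> - \<alpha>) * (g1 \<xi> \<bullet> (z - y)) < 0" using hn[OF calculation(1) dn] \<open>\<alpha> < \<theta>\<close>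
          by (simp add: mult_pos_neg)
        ultimately show False using h\<alpha> h\<theta> pr1 by linarith
      qed
      moreover have "\<not> \<theta> < \<beta>"
      proof
        assume "\<theta> < \<beta>"
        then obtain \<xi> where "\<bar>\<xi> - \<alpha>\<bar> \<le> lam" "h \<beta> - h \<theta> = (\<beta> - \<theta>) * (g1 \<xi> \<bullet> (z - y))"
          using mvtJ[OF _ \<theta>l \<beta>l Dh] by blast
        moreover have "(\<beta> - \<theta>) * (g1 \<xi> \<bullet> (z - y)) < 0" using hn[OF calculation(1) dn] \<open>\<theta> < \<beta>\<close>
          by (simp add: mult_pos_neg)
        ultimately show False using h\<beta> h\<theta> pr2 by linarith
      qed
      ultimately show ?thesis by linarith
    qed
    define g where "g s = (\<gamma> s - y) \<bullet> \<eta>" for s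
    have Dg: "DERIV g s :> g1 s \<bullet> \<eta>" for s unfolding g_def by (rule deriv_inner[OF dg1])
    have g\<alpha>: "g \<alpha> = 0" unfolding g_def using \<alpha>(2) by simp
    have g\<beta>: "g \<beta> = 0" unfolding g_def using \<beta>(1) \<eta>z by (simp add: inner_commute)
    have mab: "min \<alpha> \<beta> < max \<alpha> \<beta>" using d0 unfolding d_def by (auto simp: min_def max_def)
    have mml: "\<bar>min \<alpha> \<beta> - \<alpha>\<bar> \<le> lam" "\<bar>max \<alpha> \<beta> - \<alpha>\<bar> \<le> lam" using \<beta>l ef by (auto simp: min_def max_def)
    obtain \<xi> where \<xi>: "\<bar>\<xi> - \<alpha>\<bar> \<le> lam" "min \<alpha> \<beta> \<le> \<xi>" "\<xi> \<le> max \<alpha> \<beta>"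
      "g (max \<alpha> \<beta>) - g (min \<alpha> \<beta>) = (max \<alpha> \<beta> - min \<alpha> \<beta>) * (g1 \<xi> \<bullet> \<eta>)"
      using mvtJ[OF mab mml Dg] by auto
    have "g (max \<alpha> \<beta>) - g (min \<alpha> \<beta>) = 0" using g\<alpha> g\<beta> by (auto simp: min_def max_def)
    then have g1\<xi>: "g1 \<xi> \<bullet> \<eta> = 0" using \<xi>(4) mab by simp
    have gb: "\<bar>g1 s \<bullet> \<eta>\<bar> \<le> L * \<bar>d\<bar>" if "min \<alpha> \<beta> \<le> s" "s \<le> max \<alpha> \<beta>" for s
    proof -
      have sl: "\<bar>s - \<alpha>\<bar> \<le> lam" using that mml by (auto simp: abs_le_iff)
      have "\<bar>g1 s \<bullet> \<eta>\<bar> = \<bar>(g1 s - g1 \<xi>) \<bullet> \<eta>\<bar>" using g1\<xi> by (simp add: inner_diff_left)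
      also have "\<dots> \<le> norm (g1 s - g1 \<xi>) * norm \<eta>" by (rule Cauchy_Schwarz_ineq2)
      also have "\<dots> = norm (g1 s - g1 \<xi>)" using \<eta>1 by simp
      also have "\<dots> \<le> L * \<bar>s - \<xi>\<bar>" using Lip[OF inJ[OF \<xi>(1)] inJ[OF sl]] .
      also have "\<dots> \<le> L * \<bar>d\<bar>" using that \<xi> L0 unfolding d_def
        by (intro mult_left_mono) (auto simp: min_def max_def split: if_splits)
      finally show ?thesis .
    qed
    have g\<theta>: "\<bar>g \<theta>\<bar> \<le> L * d^2"
    proof (cases "\<theta> = \<alpha>")
      case True then show ?thesis using g\<alpha> L0 by simp
    next
      case False
      have mat: "min \<alpha> \<theta> < max \<alpha> \<theta>" using False by (auto simp: min_def max_def)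
      have mml2: "\<bar>min \<alpha> \<theta> - \<alpha>\<bar> \<le> lam" "\<bar>max \<alpha> \<theta> - \<alpha>\<bar> \<le> lam" using \<theta>l ef by (auto simp: min_def max_def)
      obtain \<zeta> where \<zeta>: "min \<alpha> \<theta> \<le> \<zeta>" "\<zeta> \<le> max \<alpha> \<theta>"
        "g (max \<alpha> \<theta>) - g (min \<alpha> \<theta>) = (max \<alpha> \<theta> - min \<alpha> \<theta>) * (g1 \<zeta> \<bullet> \<eta>)"
        using mvtJ[OF mat mml2 Dg] by auto
      have \<zeta>b: "min \<alpha> \<beta> \<le> \<zeta>" "\<zeta> \<le> max \<alpha> \<beta>" using \<zeta> betw by (auto simp: min_def max_def split: if_splits)
      have "\<bar>g \<theta>\<bar> = \<bar>g (max \<alpha> \<theta>) - g (min \<alpha> \<theta>)\<bar>" using g\<alpha> by (auto simp: min_def max_def)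
      also have "\<dots> = \<bar>\<theta> - \<alpha>\<bar> * \<bar>g1 \<zeta> \<bullet> \<eta>\<bar>" using \<zeta>(3) by (simp add: abs_mult min_def max_def)
      also have "\<dots> \<le> \<bar>d\<bar> * (L * \<bar>d\<bar>)"
        using gb[OF \<zeta>b] betw unfolding d_def by (intro mult_mono) (auto simp: min_def max_def split: if_splits)
      also have "\<dots> = L * d^2" by (simp add: power2_eq_square)
      finally show ?thesis .
    qed
    define r where "r = norm (z - y)"
    have r_dist: "dist y z = r" unfolding r_def by (simp add: dist_norm norm_minus_commute)
    have rd: "\<bar>d\<bar> * m / 2 \<le> r"
    proof -
      have "norm (d *\<^sub>R v0) \<le> norm (z - y) + norm (d *\<^sub>R v0 - (z - y))" by (rule norm_triangle_sub)
      also have "norm (d *\<^sub>R v0 - (z - y)) = norm (z - y - d *\<^sub>R v0)" by (rule norm_minus_commute)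
      finally have "\<bar>d\<bar> * norm v0 \<le> r + \<bar>d\<bar> * \<epsilon>" using Er unfolding r_def by simp
      moreover have "\<bar>d\<bar> * m \<le> \<bar>d\<bar> * norm v0" using nv0 by (intro mult_left_mono) auto
      moreover have "\<bar>d\<bar> * \<epsilon> \<le> \<bar>d\<bar> * (m / 8)" using ef unfolding \<epsilon>_def by (intro mult_left_mono) auto
      moreover have "\<bar>d\<bar> * (m / 8) = (\<bar>d\<bar> * m) / 8" "\<bar>d\<bar> * m / 2 = (\<bar>d\<bar> * m) / 2" "\<bar>d\<bar> * m \<ge> 0"
        using m0 by auto
      ultimately show ?thesis by linarith
    qed
    have r0: "r \<ge> 0" unfolding r_def by simp
    have rh: "r \<le> m^2 / (4 * L + 1)" using dyz r_dist unfolding h0_def by linarith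
    have r4: "4 * L * r \<le> m^2"
    proof -
      have "r * (4 * L + 1) \<le> m^2" using rh L0 by (simp add: pos_le_divide_eq)
      then show ?thesis using r0 by (simp add: algebra_simps)
    qed
    have dd: "\<bar>d\<bar> \<le> 2 * r / m" using rd m0 by (simp add: field_simps)
    have "d^2 \<le> (2 * r / m)^2" using dd power_mono[of "\<bar>d\<bar>" "2 * r / m" 2] by simp
    then have "L * d^2 \<le> L * (2 * r / m)^2" using L0 by (intro mult_left_mono)
    also have "\<dots> = r * ((4 * L * r) / m^2)" by (simp add: power_divide algebra_simps power2_eq_square)
    also have "\<dots> \<le> r * 1" using r4 m0 r0 by (intro mult_left_mono) (auto simp: divide_le_eq)
    finally have "L * d^2 \<le> r" by simp
    moreover have "(p - y) \<bullet> \<eta> = g \<theta>" unfolding g_def using \<theta>(1) by simp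
    ultimately show "\<bar>(p - y) \<bullet> \<eta>\<bar> \<le> dist y z" using g\<theta> r_dist by linarith
  qed
  then show ?thesis using h00 by blast
qed

lemma pow_id:
  fixes h r :: real
  assumes "r > 0" "l \<le> k"
  shows "(2 * h / r) ^ k * (r / 2) ^ (k - l) = 2 ^ l * h ^ k * (1 / r ^ l)"
proof -
  obtain j where k: "k = l + j" using assms(2) le_Suc_ex by blast
  have "(2 * h / r) ^ k * (r / 2) ^ (k - l) = (2 * h / r) ^ l * ((2 * h / r) ^ j * (r / 2) ^ j)"
    unfolding k by (simp only: power_add add_diff_cancel_left' mult.assoc)
  also have "(2 * h / r) ^ j * (r / 2) ^ j = ((2 * h / r) * (r / 2)) ^ j"
    by (simp only: power_mult_distrib)
  also have "(2 * h / r) * (r / 2) = h" using assms by simp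
  also have "(2 * h / r) ^ l * h ^ j = 2 ^ l * h ^ k * (1 / r ^ l)"
    unfolding k by (simp add: power_add power_divide power_mult_distrib)
  finally show ?thesis .
qed

theorem lemma3p1:
  fixes \<gamma> :: "real \<Rightarrow> real^2" and \<sigma> :: real and k :: nat
  assumes "smooth_closed_curve \<gamma>" and "1 \<le> k"
  shows "\<exists>C > 0. \<exists>h0 > 0. \<forall>a b c y z (\<eta> :: real^2) (xp :: nat \<Rightarrow> real \<Rightarrow> real^2) v.
    let T = convex hull {a, b, c}; \<Gamma> = \<gamma> ` {0..1}; hT = diameter T; rT = dist y z in
    nondeg_triangle a b c \<and> hT \<le> h0 \<and> shape_param T \<le> \<sigma>
    \<and> \<Gamma> \<inter> frontier T = {y, z} \<and> y \<noteq> z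
    \<and> \<not> (\<exists>e \<in> {closed_segment a b, closed_segment b c, closed_segment c a}. y \<in> e \<and> z \<in> e)
    \<and> norm \<eta> = 1 \<and> \<eta> \<bullet> (z - y) = 0
    \<and> (\<forall>l \<le> k. \<forall>t \<in> gl_nodes l. xp l t \<in> \<Gamma> \<inter> T \<and> (xp l t - gl_point y z t) \<bullet> (z - y) = 0)
    \<and> poly2 k v
    \<longrightarrow> (\<forall>x \<in> T.
          (let R = C * hT ^ k * (\<Sum>l\<le>k. (1 / rT ^ l) *
                     Max ((\<lambda>t. \<bar>dirderiv_pow (k - l) \<eta> v (xp l t)\<bar>) ` gl_nodes l))
           in \<bar>v x\<bar> \<le> R \<and> hT * norm (grad v x) \<le> R))"
proof -
  have "\<forall>l. \<exists>S \<subseteq> gl_nodes l. card S = Suc l" using gl_nodes_sub by blast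
  then obtain S where S: "\<And>l. S l \<subseteq> gl_nodes l" "\<And>l. card (S l) = Suc l" by metis
  have Sfin: "\<And>l. finite (S l)" using S(1) gl_nodes_finite finite_subset by blast
  have Sb: "\<And>l t. t \<in> S l \<Longrightarrow> \<bar>t\<bar> \<le> 1" using S(1) gl_nodes_bound by blast
  obtain Cc where Cc: "Cc > 0" and core: "\<And>Q \<delta> R s w. tdeg k Q \<Longrightarrow> (\<forall>l\<le>k. \<forall>t\<in>S l. \<bar>\<delta> l t\<bar> \<le> 2) \<Longrightarrow> 1 \<le> R \<Longrightarrow> \<bar>s\<bar> \<le> R \<Longrightarrow> \<bar>w\<bar> \<le> R \<Longrightarrow>
     \<bar>E Q s w\<bar> \<le> Cc * R ^ k * Phi k S Q \<delta> \<and> R * \<bar>E (Ds Q) s w\<bar> \<le> Cc * R ^ k * Phi k S Q \<delta>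
     \<and> R * \<bar>E (pderiv Q) s w\<bar> \<le> Cc * R ^ k * Phi k S Q \<delta>"
    using core[where S=S and k=k] Sfin S(2) Sb by blast
  obtain h0 where h0: "h0 > 0" and flat: "\<And>y z p \<eta>. y \<in> \<gamma> ` {0..1} \<Longrightarrow> z \<in> \<gamma> ` {0..1} \<Longrightarrow> p \<in> \<gamma> ` {0..1} \<Longrightarrow>
     dist y z \<le> h0 \<Longrightarrow> dist y p \<le> h0 \<Longrightarrow> y \<noteq> z \<Longrightarrow> 0 \<le> (p - y) \<bullet> (z - y) \<Longrightarrow>
     (p - y) \<bullet> (z - y) \<le> (z - y) \<bullet> (z - y) \<Longrightarrow> \<eta> \<bullet> (z - y) = 0 \<Longrightarrow> norm \<eta> = 1 \<Longrightarrow>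
     \<bar>(p - y) \<bullet> \<eta>\<bar> \<le> dist y z"
    using curve_flat[OF assms(1)] by blast
  define C where "C = 2 * Cc * real (Suc k) * 2 ^ k"
  have Cpos: "C > 0" unfolding C_def using Cc by simp
  have main: "\<forall>a b c y z (\<eta> :: real^2) (xp :: nat \<Rightarrow> real \<Rightarrow> real^2) v.
    let T = convex hull {a, b, c}; \<Gamma> = \<gamma> ` {0..1}; hT = diameter T; rT = dist y z in
    nondeg_triangle a b c \<and> hT \<le> h0 \<and> shape_param T \<le> \<sigma>
    \<and> \<Gamma> \<inter> frontier T = {y, z} \<and> y \<noteq> z
    \<and> \<not> (\<exists>e \<in> {closed_segment a b, closed_segment b c, closed_segment c a}. y \<in> e \<and> z \<in> e)
    \<and> norm \<eta> = 1 \<and> \<eta> \<bullet> (z - y) = 0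
    \<and> (\<forall>l \<le> k. \<forall>t \<in> gl_nodes l. xp l t \<in> \<Gamma> \<inter> T \<and> (xp l t - gl_point y z t) \<bullet> (z - y) = 0)
    \<and> poly2 k v
    \<longrightarrow> (\<forall>x \<in> T.
          (let R = C * hT ^ k * (\<Sum>l\<le>k. (1 / rT ^ l) *
                     Max ((\<lambda>t. \<bar>dirderiv_pow (k - l) \<eta> v (xp l t)\<bar>) ` gl_nodes l))
           in \<bar>v x\<bar> \<le> R \<and> hT * norm (grad v x) \<le> R))"
  proof (intro allI)
    fix a b c y z \<eta> :: "real^2" and xp :: "nat \<Rightarrow> real \<Rightarrow> real^2" and v :: "real^2 \<Rightarrow> real"
    define T where "T = convex hull {a, b, c}"
    define \<Gamma> where "\<Gamma> = \<gamma> ` {0..1}"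
    define hT where "hT = diameter T"
    define r where "r = dist y z"
    define Mx where "Mx l = Max ((\<lambda>t. \<bar>dirderiv_pow (k - l) \<eta> v (xp l t)\<bar>) ` gl_nodes l)" for l
    show "let T = convex hull {a, b, c}; \<Gamma> = \<gamma> ` {0..1}; hT = diameter T; rT = dist y z in
    nondeg_triangle a b c \<and> hT \<le> h0 \<and> shape_param T \<le> \<sigma>
    \<and> \<Gamma> \<inter> frontier T = {y, z} \<and> y \<noteq> z
    \<and> \<not> (\<exists>e \<in> {closed_segment a b, closed_segment b c, closed_segment c a}. y \<in> e \<and> z \<in> e)
    \<and> norm \<eta> = 1 \<and> \<eta> \<bullet> (z - y) = 0
    \<and> (\<forall>l \<le> k. \<forall>t \<in> gl_nodes l. xp l t \<in> \<Gamma> \<inter> T \<and> (xp l t - gl_point y z t) \<bullet> (z - y) = 0)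
    \<and> poly2 k v
    \<longrightarrow> (\<forall>x \<in> T.
          (let R = C * hT ^ k * (\<Sum>l\<le>k. (1 / rT ^ l) *
                     Max ((\<lambda>t. \<bar>dirderiv_pow (k - l) \<eta> v (xp l t)\<bar>) ` gl_nodes l))
           in \<bar>v x\<bar> \<le> R \<and> hT * norm (grad v x) \<le> R))"
      unfolding Let_def T_def[symmetric] \<Gamma>_def[symmetric] hT_def[symmetric] r_def[symmetric] Mx_def[symmetric]
    proof (intro impI ballI)
      fix x assume H: "nondeg_triangle a b c \<and> hT \<le> h0 \<and> shape_param T \<le> \<sigma>
        \<and> \<Gamma> \<inter> frontier T = {y, z} \<and> y \<noteq> z
        \<and> \<not> (\<exists>e \<in> {closed_segment a b, closed_segment b c, closed_segment c a}. y \<in> e \<and> z \<in> e)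
        \<and> norm \<eta> = 1 \<and> \<eta> \<bullet> (z - y) = 0
        \<and> (\<forall>l \<le> k. \<forall>t \<in> gl_nodes l. xp l t \<in> \<Gamma> \<inter> T \<and> (xp l t - gl_point y z t) \<bullet> (z - y) = 0)
        \<and> poly2 k v" and xT: "x \<in> T"
      have hh0: "hT \<le> h0" and fr: "\<Gamma> \<inter> frontier T = {y, z}" and yz: "y \<noteq> z" and \<eta>1: "norm \<eta> = 1"
        and \<eta>z: "\<eta> \<bullet> (z - y) = 0" and xpH: "\<And>l t. l \<le> k \<Longrightarrow> t \<in> gl_nodes l \<Longrightarrow> xp l t \<in> \<Gamma> \<inter> T \<and> (xp l t - gl_point y z t) \<bullet> (z - y) = 0"
        and pv: "poly2 k v" using H by auto
      have cT: "compact T" unfolding T_def by (intro compact_convex_hull finite_imp_compact) auto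
      have bT: "bounded T" using cT by (rule compact_imp_bounded)
      have convT: "convex T" unfolding T_def by simp
      have frT: "frontier T \<subseteq> T" using cT by (intro frontier_subset_closed compact_imp_closed)
      have yG: "y \<in> \<Gamma>" "z \<in> \<Gamma>" and yT: "y \<in> T" "z \<in> T" using fr frT by auto
      have dT: "dist p q \<le> hT" if "p \<in> T" "q \<in> T" for p q
        unfolding hT_def using diameter_bounded_bound[OF bT that] .
      have r0: "r > 0" unfolding r_def using yz by simp
      have rh: "r \<le> hT" unfolding r_def using dT yT by blast
      have hpos: "hT > 0" using r0 rh by linarith
      have nzy: "norm (z - y) = r" unfolding r_def by (simp add: dist_norm norm_minus_commute)
      define u where "u = (1 / r) *\<^sub>R (z - y)"
      have u1: "norm u = 1" unfolding u_def using nzy r0 by simp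
      have \<eta>u: "\<eta> \<bullet> u = 0" unfolding u_def using \<eta>z by simp
      have \<eta>\<eta>: "\<eta> \<bullet> \<eta> = 1" using \<eta>1 by (simp add: dot_square_norm)
      define mid where "mid = (1/2) *\<^sub>R y + (1/2) *\<^sub>R z"
      have midT: "mid \<in> T" unfolding mid_def by (rule convexD[OF convT yT]) auto
      define \<sigma>' where "\<sigma>' = crd mid u r"
      define \<omega> where "\<omega> = crd mid \<eta> r"
      have decomp: "p = mid + \<sigma>' p *\<^sub>R ((r / 2) *\<^sub>R u) + \<omega> p *\<^sub>R ((r / 2) *\<^sub>R \<eta>)" for p
      proof -
        have e1: "p - mid = ((p - mid) \<bullet> u) *\<^sub>R u + ((p - mid) \<bullet> \<eta>) *\<^sub>R \<eta>"
          by (rule onb_decomp[OF u1 \<eta>1 \<eta>u])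
        have e2: "\<sigma>' p *\<^sub>R ((r / 2) *\<^sub>R u) = ((p - mid) \<bullet> u) *\<^sub>R u"
          and e3: "\<omega> p *\<^sub>R ((r / 2) *\<^sub>R \<eta>) = ((p - mid) \<bullet> \<eta>) *\<^sub>R \<eta>"
          unfolding \<sigma>'_def \<omega>_def crd_def using r0 by simp_all
        have "p = mid + (p - mid)" by simp
        also have "\<dots> = mid + (((p - mid) \<bullet> u) *\<^sub>R u + ((p - mid) \<bullet> \<eta>) *\<^sub>R \<eta>)" using e1 by (rule arg_cong)
        also have "\<dots> = mid + \<sigma>' p *\<^sub>R ((r / 2) *\<^sub>R u) + \<omega> p *\<^sub>R ((r / 2) *\<^sub>R \<eta>)"
          unfolding e2 e3 by (simp add: add.assoc)
        finally show ?thesis .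
      qed
      obtain Q where tQ: "tdeg k Q" and VQ: "\<And>s w. v (mid + s *\<^sub>R ((r / 2) *\<^sub>R u) + w *\<^sub>R ((r / 2) *\<^sub>R \<eta>)) = E Q s w"
        using poly2_repr[OF pv] by blast
      have vE: "v = (\<lambda>p. E Q (crd mid u r p) (crd mid \<eta> r p))"
      proof
        fix p show "v p = E Q (crd mid u r p) (crd mid \<eta> r p)"
          using VQ[of "\<sigma>' p" "\<omega> p"] decomp[of p] unfolding \<sigma>'_def \<omega>_def by simp
      qed
      have DOF: "dirderiv_pow j \<eta> v p = (2 / r) ^ j * E ((pderiv ^^ j) Q) (\<sigma>' p) (\<omega> p)" for j p
        unfolding vE dirderiv_pow_E[OF \<eta>u \<eta>\<eta>] \<sigma>'_def \<omega>_def by simp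
      have GR: "grad v p = (2 / r) *\<^sub>R (E (Ds Q) (\<sigma>' p) (\<omega> p) *\<^sub>R u + E (pderiv Q) (\<sigma>' p) (\<omega> p) *\<^sub>R \<eta>)" for p
        unfolding vE grad_E \<sigma>'_def \<omega>_def by simp
      have zz: "(z - y) \<bullet> (z - y) = r^2" using nzy by (simp add: dot_square_norm)
      have xpinfo: "\<sigma>' (xp l t) = t \<and> \<bar>\<omega> (xp l t)\<bar> \<le> 2" if lt: "l \<le> k" "t \<in> gl_nodes l" for l t
      proof -
        have xpG: "xp l t \<in> \<Gamma>" and xpT: "xp l t \<in> T" and perp: "(xp l t - gl_point y z t) \<bullet> (z - y) = 0"
          using xpH[OF lt] by auto
        have t1: "\<bar>t\<bar> \<le> 1" using gl_nodes_bound[OF lt(2)] .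
        have gm: "gl_point y z t - mid = (t / 2) *\<^sub>R (z - y)"
          unfolding gl_point_def mid_def by (simp add: vec_eq_iff field_simps)
        have gy: "gl_point y z t - y = ((1 + t) / 2) *\<^sub>R (z - y)"
          unfolding gl_point_def by simp
        have a1: "(xp l t - mid) \<bullet> (z - y) = (t / 2) * r^2"
        proof -
          have "(xp l t - mid) \<bullet> (z - y) = (xp l t - gl_point y z t) \<bullet> (z - y) + (gl_point y z t - mid) \<bullet> (z - y)"
            by (simp add: inner_diff_left)
          also have "\<dots> = (t / 2) * r^2" unfolding perp gm using zz by simp
          finally show ?thesis .
        qed
        have s1: "\<sigma>' (xp l t) = t"
        proof -
          have "\<sigma>' (xp l t) = (2 / r) * ((1 / r) * ((xp l t - mid) \<bullet> (z - y)))"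
            unfolding \<sigma>'_def crd_def u_def by simp
          also have "\<dots> = (2 / r) * ((1 / r) * ((t / 2) * r^2))" unfolding a1 ..
          also have "\<dots> = t" using r0 by (simp add: power2_eq_square)
          finally show ?thesis .
        qed
        have a2: "(xp l t - y) \<bullet> (z - y) = ((1 + t) / 2) * r^2"
        proof -
          have "(xp l t - y) \<bullet> (z - y) = (xp l t - gl_point y z t) \<bullet> (z - y) + (gl_point y z t - y) \<bullet> (z - y)"
            by (simp add: inner_diff_left)
          also have "\<dots> = ((1 + t) / 2) * r^2" unfolding perp gy using zz by simp
          finally show ?thesis .
        qed
        have "\<bar>(xp l t - y) \<bullet> \<eta>\<bar> \<le> dist y z"
        proof (rule flat)
          show "y \<in> \<gamma> ` {0..1}" "z \<in> \<gamma> ` {0..1}" "xp l t \<in> \<gamma> ` {0..1}" using yG xpG unfolding \<Gamma>_def by auto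
          show "dist y z \<le> h0" using rh hh0 r_def by simp
          show "dist y (xp l t) \<le> h0" using dT[OF yT(1) xpT] hh0 by simp
          show "y \<noteq> z" by fact
          show "0 \<le> (xp l t - y) \<bullet> (z - y)" unfolding a2 using t1 by (intro mult_nonneg_nonneg) (auto simp: abs_le_iff)
          show "(xp l t - y) \<bullet> (z - y) \<le> (z - y) \<bullet> (z - y)" unfolding a2 zz using t1
            by (intro mult_left_le_one_le) (auto simp: abs_le_iff)
          show "\<eta> \<bullet> (z - y) = 0" "norm \<eta> = 1" by fact+
        qed
        moreover have "(xp l t - mid) \<bullet> \<eta> = (xp l t - y) \<bullet> \<eta>"
        proof -
          have "xp l t - mid = (xp l t - y) - (1/2) *\<^sub>R (z - y)" unfolding mid_def by (simp add: vec_eq_iff field_simps)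
          then have "(xp l t - mid) \<bullet> \<eta> = (xp l t - y) \<bullet> \<eta> - (1/2) * ((z - y) \<bullet> \<eta>)"
            by (simp only: inner_diff_left inner_scaleR_left)
          then show ?thesis using \<eta>z by (simp add: inner_commute)
        qed
        ultimately have "\<bar>(xp l t - mid) \<bullet> \<eta>\<bar> \<le> r" using r_def by simp
        then have "(2 / r) * \<bar>(xp l t - mid) \<bullet> \<eta>\<bar> \<le> (2 / r) * r" using r0 by (intro mult_left_mono) auto
        then have "\<bar>\<omega> (xp l t)\<bar> \<le> (2 / r) * r" unfolding \<omega>_def crd_def using r0
          by (simp add: abs_mult)
        then show ?thesis using s1 r0 by simp
      qed
      define \<delta> where "\<delta> l t = \<omega> (xp l t)" for l t
      have \<delta>b: "\<forall>l\<le>k. \<forall>t\<in>S l. \<bar>\<delta> l t\<bar> \<le> 2" unfolding \<delta>_def using xpinfo S(1) by blast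
      define R where "R = 2 * hT / r"
      have R1: "1 \<le> R" unfolding R_def using rh r0 by (simp add: field_simps)
      have cb: "\<bar>crd mid e r x\<bar> \<le> R" if "norm e = 1" for e
      proof -
        have "\<bar>(x - mid) \<bullet> e\<bar> \<le> norm (x - mid) * norm e" by (rule Cauchy_Schwarz_ineq2)
        also have "\<dots> \<le> hT" using dT[OF xT midT] that by (simp add: dist_norm)
        finally show ?thesis unfolding crd_def R_def using r0 by (simp add: abs_mult field_simps)
      qed
      have sR: "\<bar>\<sigma>' x\<bar> \<le> R" unfolding \<sigma>'_def using cb[OF u1] .
      have wR: "\<bar>\<omega> x\<bar> \<le> R" unfolding \<omega>_def using cb[OF \<eta>1] .
      define P where "P = Phi k S Q \<delta>"
      have CB: "\<bar>E Q (\<sigma>' x) (\<omega> x)\<bar> \<le> Cc * R ^ k * P \<and> R * \<bar>E (Ds Q) (\<sigma>' x) (\<omega> x)\<bar> \<le> Cc * R ^ k * P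
         \<and> R * \<bar>E (pderiv Q) (\<sigma>' x) (\<omega> x)\<bar> \<le> Cc * R ^ k * P"
        unfolding P_def by (rule core[OF tQ \<delta>b R1 sR wR])
      have Mx0: "Mx l \<ge> 0" for l
      proof -
        have "S l \<noteq> {}" using S(2)[of l] by auto
        then obtain t where "t \<in> S l" by blast
        then have t: "t \<in> gl_nodes l" using S(1) by blast
        have "\<bar>dirderiv_pow (k - l) \<eta> v (xp l t)\<bar> \<le> Mx l"
          unfolding Mx_def using t gl_nodes_finite by (intro Max_ge) auto
        then show ?thesis by linarith
      qed
      have Pb: "P \<le> (\<Sum>l\<le>k. real (Suc k) * ((r / 2) ^ (k - l) * Mx l))"
        unfolding P_def Phi_def
      proof (rule sum_mono)
        fix l assume l: "l \<in> {..k}"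
        have "(\<Sum>t\<in>S l. \<bar>E ((pderiv ^^ (k - l)) Q) t (\<delta> l t)\<bar>) \<le> (\<Sum>t\<in>S l. (r / 2) ^ (k - l) * Mx l)"
        proof (rule sum_mono)
          fix t assume t: "t \<in> S l"
          then have tg: "t \<in> gl_nodes l" using S(1) by blast
          have xi: "\<sigma>' (xp l t) = t" using xpinfo l tg by auto
          have "dirderiv_pow (k - l) \<eta> v (xp l t) = (2 / r) ^ (k - l) * E ((pderiv ^^ (k - l)) Q) t (\<delta> l t)"
            unfolding DOF xi \<delta>_def ..
          then have "E ((pderiv ^^ (k - l)) Q) t (\<delta> l t) = (r / 2) ^ (k - l) * dirderiv_pow (k - l) \<eta> v (xp l t)"
            using r0 by (simp add: power_divide field_simps)
          moreover have "\<bar>dirderiv_pow (k - l) \<eta> v (xp l t)\<bar> \<le> Mx l"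
            unfolding Mx_def using tg gl_nodes_finite by (intro Max_ge) auto
          ultimately show "\<bar>E ((pderiv ^^ (k - l)) Q) t (\<delta> l t)\<bar> \<le> (r / 2) ^ (k - l) * Mx l"
            using r0 by (simp add: abs_mult mult_left_mono)
        qed
        also have "\<dots> = real (Suc l) * ((r / 2) ^ (k - l) * Mx l)" using S(2)[of l] by simp
        also have "\<dots> \<le> real (Suc k) * ((r / 2) ^ (k - l) * Mx l)"
          using l Mx0[of l] r0 by (intro mult_right_mono) auto
        finally show "(\<Sum>t\<in>S l. \<bar>E ((pderiv ^^ (k - l)) Q) t (\<delta> l t)\<bar>) \<le> real (Suc k) * ((r / 2) ^ (k - l) * Mx l)" .
      qed
      define K2 where "K2 = Cc * real (Suc k) * (2 ^ k * hT ^ k * (\<Sum>l\<le>k. 1 / r ^ l * Mx l))"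
      have key: "Cc * R ^ k * P \<le> K2"
      proof -
        have "Cc * R ^ k * P \<le> Cc * R ^ k * (\<Sum>l\<le>k. real (Suc k) * ((r / 2) ^ (k - l) * Mx l))"
          using Pb Cc R1 by (intro mult_left_mono) auto
        also have "\<dots> = Cc * real (Suc k) * (\<Sum>l\<le>k. R ^ k * (r / 2) ^ (k - l) * Mx l)"
          by (simp add: sum_distrib_left mult_ac)
        also have "(\<Sum>l\<le>k. R ^ k * (r / 2) ^ (k - l) * Mx l) = (\<Sum>l\<le>k. 2 ^ l * hT ^ k * (1 / r ^ l) * Mx l)"
          unfolding R_def using pow_id[OF r0] by (intro sum.cong) auto
        also have "\<dots> \<le> (\<Sum>l\<le>k. 2 ^ k * hT ^ k * (1 / r ^ l) * Mx l)"
          using Mx0 hpos r0 by (intro sum_mono mult_right_mono power_increasing) auto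
        also have "\<dots> = 2 ^ k * hT ^ k * (\<Sum>l\<le>k. 1 / r ^ l * Mx l)"
          by (simp add: sum_distrib_left mult_ac)
        finally show ?thesis unfolding K2_def using Cc by (simp add: mult_left_mono)
      qed
      have Sg: "0 \<le> (\<Sum>l\<le>k. 1 / r ^ l * Mx l)" using Mx0 r0 by (intro sum_nonneg) auto
      have RR0: "0 \<le> C * hT ^ k * (\<Sum>l\<le>k. 1 / r ^ l * Mx l)" using Cpos hpos Sg by simp
      have K20: "0 \<le> K2" unfolding K2_def using Cc hpos Sg by simp
      have eqC: "C * hT ^ k * (\<Sum>l\<le>k. 1 / r ^ l * Mx l) = 2 * K2" unfolding C_def K2_def by (simp add: mult_ac)
      have v1: "\<bar>v x\<bar> \<le> C * hT ^ k * (\<Sum>l\<le>k. 1 / r ^ l * Mx l)"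
      proof -
        have "v x = E Q (\<sigma>' x) (\<omega> x)" unfolding vE \<sigma>'_def \<omega>_def ..
        then show ?thesis using CB key eqC K20 by linarith
      qed
      have g1: "hT * norm (grad v x) \<le> C * hT ^ k * (\<Sum>l\<le>k. 1 / r ^ l * Mx l)"
      proof -
        define A where "A = E (Ds Q) (\<sigma>' x) (\<omega> x)"
        define B where "B = E (pderiv Q) (\<sigma>' x) (\<omega> x)"
        have "norm (grad v x) = (2 / r) * norm (A *\<^sub>R u + B *\<^sub>R \<eta>)" unfolding GR A_def B_def using r0 by simp
        also have "\<dots> \<le> (2 / r) * (\<bar>A\<bar> + \<bar>B\<bar>)"
        proof -
          have "norm (A *\<^sub>R u + B *\<^sub>R \<eta>) \<le> norm (A *\<^sub>R u) + norm (B *\<^sub>R \<eta>)" by (rule norm_triangle_ineq)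
          also have "\<dots> = \<bar>A\<bar> + \<bar>B\<bar>" using u1 \<eta>1 by simp
          finally show ?thesis using r0 by (intro mult_left_mono) auto
        qed
        finally have "hT * norm (grad v x) \<le> hT * ((2 / r) * (\<bar>A\<bar> + \<bar>B\<bar>))" using hpos by (intro mult_left_mono) auto
        also have "\<dots> = R * \<bar>A\<bar> + R * \<bar>B\<bar>" unfolding R_def by (simp add: algebra_simps add_divide_distrib)
        also have "\<dots> \<le> 2 * (Cc * R ^ k * P)" using CB unfolding A_def B_def by linarith
        also have "\<dots> \<le> C * hT ^ k * (\<Sum>l\<le>k. 1 / r ^ l * Mx l)" using key eqC by linarith
        finally show ?thesis .
      qed
      show "\<bar>v x\<bar> \<le> C * hT ^ k * (\<Sum>l\<le>k. 1 / r ^ l * Mx l) \<and> hT * norm (grad v x) \<le> C * hT ^ k * (\<Sum>l\<le>k. 1 / r ^ l * Mx l)"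
        using v1 g1 by blast
    qed
  qed
  show ?thesis using Cpos h0 main by blast
qed

end
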